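(* Consider the GTFG system with $\lambda=0$ (setting below) and the invariant set $\mathcal M_2$, the closure in $\mathcal P^6$ of the set of points with $x_1x_2\ne0$ satisfying $F=0$, $F_1=0$, with partial integrals $\mathsf M$ and $L$ (defined below). Then the outer type of the points of $\mathcal M_2$ is as follows: if $\mathsf M=\varepsilon_1^2$ or $L=0$, the points are degenerate; if $L\neq0$, then all points with $\mathsf M>\varepsilon_1^2$ have outer type "center" and all points with $\mathsf M<\varepsilon_1^2$ have outer type "saddle". (Precisely, $C_\Phi=-4r^4(\mathsf M-\varepsilon_1^2)L^2$.)
   Context: Phase variables $\mathbf M,\boldsymbol\alpha,\boldsymbol\beta\in\mathbb R^3$ on $e(3,2)^*\cong\mathbb R^9$ with Lie–Poisson dynamics: a function $\Phi$ generates $\mathrm{sgrad}\,\Phi$: $\dot{\mathbf M}=\mathbf M\times\partial\Phi/\partial\mathbf M+\boldsymbol\alpha\times\partial\Phi/\partial\boldsymbol\alpha+\boldsymbol\beta\times\partial\Phi/\partial\boldsymbol\beta$, $\dot{\boldsymbol\alpha}=\boldsymbol\alpha\times\partial\Phi/\partial\mathbf M$, $\dot{\boldsymbol\beta}=\boldsymbol\beta\times\partial\Phi/\partial\mathbf M$. Constants $a>b>0$, $p^2=a^2+b^2$, $r^2=a^2-b^2$; phase space $\mathcal P^6=\{\boldsymbol\alpha^2=a^2,\boldsymbol\beta^2=b^2,\boldsymbol\alpha\cdot\boldsymbol\beta=0\}$. Real parameters $\varepsilon_0\ge0,\varepsilon_1,\lambda$. GTFG Hamiltonian $H=\tfrac14(M_1^2+M_2^2)+\tfrac12(M_3-\lambda)^2-\varepsilon_1[(\alpha_2M_3-\alpha_3M_2)+(\beta_3M_1-\beta_1M_3)]-\varepsilon_0(\alpha_1+\beta_2)$,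 with further first integrals $K,G$: $K=\big[\tfrac14(M_1^2-M_2^2)+\varepsilon_0(\alpha_1-\beta_2)+\varepsilon_1\big((\boldsymbol\alpha\times\mathbf M)\cdot\mathbf e_1-(\boldsymbol\beta\times\mathbf M)\cdot\mathbf e_2-\varepsilon_1(\boldsymbol\alpha^2-\boldsymbol\beta^2)\big)\big]^2+\big[\tfrac12M_1M_2+\varepsilon_0(\alpha_2+\beta_1)+\varepsilon_1\big((\boldsymbol\alpha\times\mathbf M)\cdot\mathbf e_2+(\boldsymbol\beta\times\mathbf M)\cdot\mathbf e_1-2\varepsilon_1\boldsymbol\alpha\cdot\boldsymbol\beta\big)\big]^2$ (for $\lambda=0$), $G=\tfrac14[(\mathbf M\cdot\boldsymbol\alpha)^2+(\mathbf M\cdot\boldsymbol\beta)^2]+\tfrac12M_3(\boldsymbol\alpha\times\boldsymbol\beta)\cdot\mathbf M+\varepsilon_0[\boldsymbol\beta^2\alpha_1+\boldsymbol\alpha^2\beta_2-(\boldsymbol\alpha\cdot\boldsymbol\beta)(\alpha_2+\beta_1)]-\varepsilon_1[\boldsymbol\beta^2(\boldsymbol\alpha\times\mathbf M)\cdot\mathbf e_1+\boldsymbol\alpha^2(\boldsymbol\beta\times\mathbf M)\cdot\mathbf e_2-(\boldsymbol\alpha\cdot\boldsymbol\beta)((\boldsymbol\alpha\times\mathbf M)\cdot\mathbf e_2+(\boldsymbol\beta\times\mathbf M)\cdot\mathbf e_1)]$ (for $\lambda=0$), where $\mathbf e_1=(1,0,0)$, $\mathbf e_2=(0,1,0)$.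 Complex variables: $x_{1,2}=(\alpha_1-\beta_2)\pm\mathrm i(\alpha_2+\beta_1)$, $y_{1,2}=(\alpha_1+\beta_2)\pm\mathrm i(\alpha_2-\beta_1)$, $z_{1,2}=\alpha_3\pm\mathrm i\beta_3$, $w_{1,2}=\tfrac12(M_1\pm\mathrm iM_2)$, $w_3=M_3-\lambda$; $\sqrt{x_1x_2}=|x_1|$. Functions: $\xi_1=w_1^2+\varepsilon_0x_1-\mathrm i\varepsilon_1(x_1w_3-2z_1w_1)-\varepsilon_1^2r^2$, $\xi_2=w_2^2+\varepsilon_0x_2+\mathrm i\varepsilon_1(x_2w_3-2z_2w_2)-\varepsilon_1^2r^2$; $F=\sqrt{x_1x_2}\,w_3-\frac{x_2z_1w_1+x_1z_2w_2}{\sqrt{x_1x_2}}+\mathrm i\varepsilon_1r^2\frac{x_1-x_2}{\sqrt{x_1x_2}}$; $F_1=\frac{x_2}{x_1}\xi_1-\frac{x_1}{x_2}\xi_2$; $\mathsf M=\frac1{2r^2}\big(\frac{x_2}{x_1}\xi_1+\frac{x_1}{x_2}\xi_2\big)+\varepsilon_1^2$; $L=\frac1{\sqrt{x_1x_2}}[(w_1+\mathrm i\varepsilon_1z_1)(w_2-\mathrm i\varepsilon_1z_2)+(x_1x_2+z_1z_2)(\mathsf M-\varepsilon_1^2)]+\varepsilon_1^2\sqrt{x_1x_2}$. Outer type: $\mathcal M_2$ lies in $\{\Phi=0,d\Phi=0\}$ for the first integral $\Phi=(p^2H-2G+\varepsilon_1^2r^4)^2-r^4K$ (equivalently one may use $\Phi_2=\tfrac14F_1^2-F^2(\mathsf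 M-\varepsilon_1^2)$, which gives the same linearization on $\mathcal M_2$ up to positive factor conventions used in the paper). Each $x\in\mathcal M_2$ is a zero of $\mathrm{sgrad}\,\Phi$; let $A_\Phi$ be its linearization at $x$ on $\mathbb R^9$; its characteristic polynomial is $-\mu^7(\mu^2-C_\Phi)$ with $C_\Phi=\tfrac12\operatorname{tr}(A_\Phi^2)$. The outer type of $x$ is "center" if $C_\Phi<0$, "saddle" if $C_\Phi>0$, and $x$ is degenerate if $C_\Phi=0$. The paper computes $C_\Phi$ with $\Phi=\Phi_2$. *)

theory Defs
  imports "HOL-Analysis.Analysis" "HOL-Analysis.Cross3"
begin

definition Mv :: "real^9 \<Rightarrow> real^3" where
  "Mv s = vector [s$1, s$2, s$3]"
definition alv :: "real^9 \<Rightarrow> real^3" where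
  "alv s = vector [s$4, s$5, s$6]"
definition bev :: "real^9 \<Rightarrow> real^3" where
  "bev s = vector [s$7, s$8, s$9]"

definition pd :: "(real^9 \<Rightarrow> real) \<Rightarrow> 9 \<Rightarrow> real^9 \<Rightarrow> real" where
  "pd Phi i s = frechet_derivative Phi (at s) (axis i 1)"

text \<open>Lie--Poisson (skew) gradient on e(3,2)^* = R^9.\<close>
definition sgrad :: "(real^9 \<Rightarrow> real) \<Rightarrow> real^9 \<Rightarrow> real^9" where
  "sgrad Phi s =
    (let dM = vector [pd Phi 1 s, pd Phi 2 s, pd Phi 3 s];
         dA = vector [pd Phi 4 s, pd Phi 5 s, pd Phi 6 s];
         dB = vector [pd Phi 7 s, pd Phi 8 s, pd Phi 9 s];
         Md = cross3 (Mv s) dM + cross3 (alv s) dA + cross3 (bev s) dB;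
         Ad = cross3 (alv s) dM;
         Bd = cross3 (bev s) dM
     in vector [Md$1, Md$2, Md$3, Ad$1, Ad$2, Ad$3, Bd$1, Bd$2, Bd$3])"

definition A_lin :: "(real^9 \<Rightarrow> real) \<Rightarrow> real^9 \<Rightarrow> real^9^9" where
  "A_lin Phi s = matrix (frechet_derivative (sgrad Phi) (at s))"

definition C_Phi :: "(real^9 \<Rightarrow> real) \<Rightarrow> real^9 \<Rightarrow> real" where
  "C_Phi Phi s = trace (A_lin Phi s ** A_lin Phi s) / 2"

definition outer_center :: "(real^9 \<Rightarrow> real) \<Rightarrow> real^9 \<Rightarrow> bool" where
  "outer_center Phi s \<longleftrightarrow> C_Phi Phi s < 0"
definition outer_saddle :: "(real^9 \<Rightarrow> real) \<Rightarrow> real^9 \<Rightarrow> bool" where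
  "outer_saddle Phi s \<longleftrightarrow> C_Phi Phi s > 0"
definition outer_degenerate :: "(real^9 \<Rightarrow> real) \<Rightarrow> real^9 \<Rightarrow> bool" where
  "outer_degenerate Phi s \<longleftrightarrow> C_Phi Phi s = 0"

definition P6 :: "real \<Rightarrow> real \<Rightarrow> (real^9) set" where
  "P6 a b = {s. alv s \<bullet> alv s = a\<^sup>2 \<and> bev s \<bullet> bev s = b\<^sup>2 \<and> alv s \<bullet> bev s = 0}"

text \<open>Complex variables (lambda = 0).\<close>
definition cx1 :: "real^9 \<Rightarrow> complex" where
  "cx1 s = Complex (s$4 - s$8) (s$5 + s$7)"
definition cx2 :: "real^9 \<Rightarrow> complex" where
  "cx2 s = Complex (s$4 - s$8) (- (s$5 + s$7))"
definition cz1 :: "real^9 \<Rightarrow> complex" where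
  "cz1 s = Complex (s$6) (s$9)"
definition cz2 :: "real^9 \<Rightarrow> complex" where
  "cz2 s = Complex (s$6) (- s$9)"
definition cw1 :: "real^9 \<Rightarrow> complex" where
  "cw1 s = Complex (s$1 / 2) (s$2 / 2)"
definition cw2 :: "real^9 \<Rightarrow> complex" where
  "cw2 s = Complex (s$1 / 2) (- s$2 / 2)"
definition cw3 :: "real^9 \<Rightarrow> complex" where
  "cw3 s = complex_of_real (s$3)"

text \<open>sqrt(x1 x2) = |x1|.\<close>
definition csq :: "real^9 \<Rightarrow> complex" where
  "csq s = complex_of_real (cmod (cx1 s))"

definition xi1 :: "real \<Rightarrow> real \<Rightarrow> real \<Rightarrow> real \<Rightarrow> real^9 \<Rightarrow> complex" where
  "xi1 a b e0 e1 s = (cw1 s)\<^sup>2 + of_real e0 * cx1 s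
     - \<i> * of_real e1 * (cx1 s * cw3 s - 2 * cz1 s * cw1 s) - of_real (e1\<^sup>2 * (a\<^sup>2 - b\<^sup>2))"

definition xi2 :: "real \<Rightarrow> real \<Rightarrow> real \<Rightarrow> real \<Rightarrow> real^9 \<Rightarrow> complex" where
  "xi2 a b e0 e1 s = (cw2 s)\<^sup>2 + of_real e0 * cx2 s
     + \<i> * of_real e1 * (cx2 s * cw3 s - 2 * cz2 s * cw2 s) - of_real (e1\<^sup>2 * (a\<^sup>2 - b\<^sup>2))"

definition FF :: "real \<Rightarrow> real \<Rightarrow> real \<Rightarrow> real \<Rightarrow> real^9 \<Rightarrow> complex" where
  "FF a b e0 e1 s = csq s * cw3 s
     - (cx2 s * cz1 s * cw1 s + cx1 s * cz2 s * cw2 s) / csq s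
     + \<i> * of_real e1 * of_real (a\<^sup>2 - b\<^sup>2) * (cx1 s - cx2 s) / csq s"

definition FF1 :: "real \<Rightarrow> real \<Rightarrow> real \<Rightarrow> real \<Rightarrow> real^9 \<Rightarrow> complex" where
  "FF1 a b e0 e1 s = cx2 s / cx1 s * xi1 a b e0 e1 s - cx1 s / cx2 s * xi2 a b e0 e1 s"

definition MMc :: "real \<Rightarrow> real \<Rightarrow> real \<Rightarrow> real \<Rightarrow> real^9 \<Rightarrow> complex" where
  "MMc a b e0 e1 s = 1 / (2 * of_real (a\<^sup>2 - b\<^sup>2))
     * (cx2 s / cx1 s * xi1 a b e0 e1 s + cx1 s / cx2 s * xi2 a b e0 e1 s) + of_real (e1\<^sup>2)"

definition LLc :: "real \<Rightarrow> real \<Rightarrow> real \<Rightarrow> real \<Rightarrow> real^9 \<Rightarrow> complex" where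
  "LLc a b e0 e1 s = 1 / csq s *
     ((cw1 s + \<i> * of_real e1 * cz1 s) * (cw2 s - \<i> * of_real e1 * cz2 s)
      + (cx1 s * cx2 s + cz1 s * cz2 s) * (MMc a b e0 e1 s - of_real (e1\<^sup>2)))
     + of_real (e1\<^sup>2) * csq s"

definition Phi2c :: "real \<Rightarrow> real \<Rightarrow> real \<Rightarrow> real \<Rightarrow> real^9 \<Rightarrow> complex" where
  "Phi2c a b e0 e1 s = (FF1 a b e0 e1 s)\<^sup>2 / 4
     - (FF a b e0 e1 s)\<^sup>2 * (MMc a b e0 e1 s - of_real (e1\<^sup>2))"

text \<open>Real-valued versions (the expressions are real for real phase points).\<close>
definition MMr :: "real \<Rightarrow> real \<Rightarrow> real \<Rightarrow> real \<Rightarrow> real^9 \<Rightarrow> real" where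
  "MMr a b e0 e1 s = Re (MMc a b e0 e1 s)"
definition LLr :: "real \<Rightarrow> real \<Rightarrow> real \<Rightarrow> real \<Rightarrow> real^9 \<Rightarrow> real" where
  "LLr a b e0 e1 s = Re (LLc a b e0 e1 s)"
definition Phi2 :: "real \<Rightarrow> real \<Rightarrow> real \<Rightarrow> real \<Rightarrow> real^9 \<Rightarrow> real" where
  "Phi2 a b e0 e1 s = Re (Phi2c a b e0 e1 s)"

definition M2 :: "real \<Rightarrow> real \<Rightarrow> real \<Rightarrow> real \<Rightarrow> (real^9) set" where
  "M2 a b e0 e1 = closure {s \<in> P6 a b. cx1 s * cx2 s \<noteq> 0 \<and> FF a b e0 e1 s = 0 \<and> FF1 a b e0 e1 s = 0}"

end

theory Submission imports Defs begin

lemma exhaust_9: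
  fixes x :: 9
  shows "x = 1 \<or> x = 2 \<or> x = 3 \<or> x = 4 \<or> x = 5 \<or> x = 6 \<or> x = 7 \<or> x = 8 \<or> x = 9"
proof (induct x)
  case (of_int z)
  then have "z = 0 \<or> z = 1 \<or> z = 2 \<or> z = 3 \<or> z = 4 \<or> z = 5 \<or> z = 6 \<or> z = 7 \<or> z = 8" by fastforce
  then show ?case by auto
qed

lemma UNIV_9: "(UNIV::9 set) = {1,2,3,4,5,6,7,8,9}"
  using exhaust_9 by auto

lemma sum_9: "sum f (UNIV::9 set) = f 1 + f 2 + f 3 + f 4 + f 5 + f 6 + f 7 + f 8 + f 9"
  unfolding UNIV_9 by (simp add: ac_simps)

lemma has_derivative_vec_nth_my [derivative_intros]:
  "((\<lambda>x::real^'n. x $ i) has_derivative (\<lambda>v. v $ i)) F"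
  by (rule bounded_linear_imp_has_derivative) (rule bounded_linear_vec_nth)

lemma differentiable_vec_nth_my [simp, derivative_intros]:
  "(\<lambda>x::real^'n. x $ i) differentiable F"
  using has_derivative_vec_nth_my differentiableI by blast

lemma continuous_on_vec_nth_my [continuous_intros]:
  "continuous_on S (\<lambda>x::real^'n. x $ i)"
  by (rule linear_continuous_on) (rule bounded_linear_vec_nth)

lemma continuous_vec_nth_my [continuous_intros]:
  "continuous (at x within S) (\<lambda>x::real^'n. x $ i)"
  by (rule linear_continuous_within[OF bounded_linear_vec_nth])

definition fS :: "real \<Rightarrow> real \<Rightarrow> real \<Rightarrow> real^9 \<Rightarrow> real" where
  "fS e0 e1 r x = (0 - x$1*x$4*x$6 - x$1*x$5*x$9 + x$1*x$6*x$8 - x$1*x$7*x$9 + x$2*x$4*x$9 - x$2*x$5*x$6 - x$2*x$6*x$7 - x$2*x$8*x$9 + x$3*x$4^2 - 2*x$3*x$4*x$8 + x$3*x$5^2 + 2*x$3*x$5*x$7 + x$3*x$7^2 + x$3*x$8^2 - 2*x$5*e1*r - 2*x$7*e1*r)"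

definition gS :: "real \<Rightarrow> real \<Rightarrow> real \<Rightarrow> real^9 \<Rightarrow> real" where
  "gS e0 e1 r x = (0 - x$1^2*x$4*x$5 - x$1^2*x$4*x$7 + x$1^2*x$5*x$8 + x$1^2*x$7*x$8 + x$1*x$2*x$4^2 - 2*x$1*x$2*x$4*x$8 - x$1*x$2*x$5^2 - 2*x$1*x$2*x$5*x$7 - x$1*x$2*x$7^2 + x$1*x$2*x$8^2 + 2*x$1*x$4^2*x$6*e1 + 4*x$1*x$4*x$5*x$9*e1 - 4*x$1*x$4*x$6*x$8*e1 + 4*x$1*x$4*x$7*x$9*e1 - 2*x$1*x$5^2*x$6*e1 - 4*x$1*x$5*x$6*x$7*e1 - 4*x$1*x$5*x$8*x$9*e1 - 2*x$1*x$6*x$7^2*e1 + 2*x$1*x$6*x$8^2*e1 - 4*x$1*x$7*x$8*x$9*e1 + x$2^2*x$4*x$5 + x$2^2*x$4*x$7 - x$2^2*x$5*x$8 - x$2^2*x$7*x$8 - 2*x$2*x$4^2*x$9*e1 + 4*x$2*x$4*x$5*x$6*e1 + 4*x$2*x$4*x$6*x$7*e1 + 4*x$2*x$4*x$8*x$9*e1 + 2*x$2*x$5^2*x$9*e1 - 4*x$2*x$5*x$6*x$8*e1 + 4*x$2*x$5*x$7*x$9*e1 - 4*x$2*x$6*x$7*x$8*e1 + 2*x$2*x$7^2*x$9*e1 - 2*x$2*x$8^2*x$9*e1 - 2*x$3*x$4^3*e1 + 6*x$3*x$4^2*x$8*e1 - 2*x$3*x$4*x$5^2*e1 - 4*x$3*x$4*x$5*x$7*e1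 - 2*x$3*x$4*x$7^2*e1 - 6*x$3*x$4*x$8^2*e1 + 2*x$3*x$5^2*x$8*e1 + 4*x$3*x$5*x$7*x$8*e1 + 2*x$3*x$7^2*x$8*e1 + 2*x$3*x$8^3*e1 - 2*x$4^2*x$5*e0 - 2*x$4^2*x$7*e0 + 4*x$4*x$5*x$8*e0 + 4*x$4*x$5*e1^2*r + 4*x$4*x$7*x$8*e0 + 4*x$4*x$7*e1^2*r - 2*x$5^3*e0 - 6*x$5^2*x$7*e0 - 6*x$5*x$7^2*e0 - 2*x$5*x$8^2*e0 - 4*x$5*x$8*e1^2*r - 2*x$7^3*e0 - 2*x$7*x$8^2*e0 - 4*x$7*x$8*e1^2*r)"

definition pmS :: "real \<Rightarrow> real \<Rightarrow> real \<Rightarrow> real^9 \<Rightarrow> real" where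
  "pmS e0 e1 r x = (x$1^2*x$4^2 - 2*x$1^2*x$4*x$8 - x$1^2*x$5^2 - 2*x$1^2*x$5*x$7 - x$1^2*x$7^2 + x$1^2*x$8^2 + 4*x$1*x$2*x$4*x$5 + 4*x$1*x$2*x$4*x$7 - 4*x$1*x$2*x$5*x$8 - 4*x$1*x$2*x$7*x$8 - 4*x$1*x$4^2*x$9*e1 + 8*x$1*x$4*x$5*x$6*e1 + 8*x$1*x$4*x$6*x$7*e1 + 8*x$1*x$4*x$8*x$9*e1 + 4*x$1*x$5^2*x$9*e1 - 8*x$1*x$5*x$6*x$8*e1 + 8*x$1*x$5*x$7*x$9*e1 - 8*x$1*x$6*x$7*x$8*e1 + 4*x$1*x$7^2*x$9*e1 - 4*x$1*x$8^2*x$9*e1 - x$2^2*x$4^2 + 2*x$2^2*x$4*x$8 + x$2^2*x$5^2 + 2*x$2^2*x$5*x$7 + x$2^2*x$7^2 - x$2^2*x$8^2 - 4*x$2*x$4^2*x$6*e1 - 8*x$2*x$4*x$5*x$9*e1 + 8*x$2*x$4*x$6*x$8*e1 - 8*x$2*x$4*x$7*x$9*e1 + 4*x$2*x$5^2*x$6*e1 + 8*x$2*x$5*x$6*x$7*e1 + 8*x$2*x$5*x$8*x$9*e1 + 4*x$2*x$6*x$7^2*e1 - 4*x$2*x$6*x$8^2*e1 + 8*x$2*x$7*x$8*x$9*e1 - 4*x$3*x$4^2*x$5*e1 - 4*x$3*x$4^2*x$7*e1 + 8*x$3*x$4*x$5*x$8*e1 + 8*x$3*x$4*x$7*x$8*e1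 - 4*x$3*x$5^3*e1 - 12*x$3*x$5^2*x$7*e1 - 12*x$3*x$5*x$7^2*e1 - 4*x$3*x$5*x$8^2*e1 - 4*x$3*x$7^3*e1 - 4*x$3*x$7*x$8^2*e1 + 4*x$4^3*e0 - 12*x$4^2*x$8*e0 - 4*x$4^2*e1^2*r + 4*x$4*x$5^2*e0 + 8*x$4*x$5*x$7*e0 + 4*x$4*x$7^2*e0 + 12*x$4*x$8^2*e0 + 8*x$4*x$8*e1^2*r - 4*x$5^2*x$8*e0 + 4*x$5^2*e1^2*r - 8*x$5*x$7*x$8*e0 + 8*x$5*x$7*e1^2*r - 4*x$7^2*x$8*e0 + 4*x$7^2*e1^2*r - 4*x$8^3*e0 - 4*x$8^2*e1^2*r)"

definition PLS :: "real \<Rightarrow> real \<Rightarrow> real \<Rightarrow> real^9 \<Rightarrow> real" where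
  "PLS e0 e1 r x = (x$1^2*x$4^4 - 4*x$1^2*x$4^3*x$8 + x$1^2*x$4^2*x$6^2 + 6*x$1^2*x$4^2*x$8^2 + x$1^2*x$4^2*x$9^2 + x$1^2*x$4^2*r - 2*x$1^2*x$4*x$6^2*x$8 - 4*x$1^2*x$4*x$8^3 - 2*x$1^2*x$4*x$8*x$9^2 - 2*x$1^2*x$4*x$8*r - x$1^2*x$5^4 - 4*x$1^2*x$5^3*x$7 - x$1^2*x$5^2*x$6^2 - 6*x$1^2*x$5^2*x$7^2 - x$1^2*x$5^2*x$9^2 + x$1^2*x$5^2*r - 2*x$1^2*x$5*x$6^2*x$7 - 4*x$1^2*x$5*x$7^3 - 2*x$1^2*x$5*x$7*x$9^2 + 2*x$1^2*x$5*x$7*r - x$1^2*x$6^2*x$7^2 + x$1^2*x$6^2*x$8^2 - x$1^2*x$7^4 - x$1^2*x$7^2*x$9^2 + x$1^2*x$7^2*r + x$1^2*x$8^4 + x$1^2*x$8^2*x$9^2 + x$1^2*x$8^2*r + 4*x$1*x$2*x$4^3*x$5 + 4*x$1*x$2*x$4^3*x$7 - 12*x$1*x$2*x$4^2*x$5*x$8 - 12*x$1*x$2*x$4^2*x$7*x$8 + 4*x$1*x$2*x$4*x$5^3 + 12*x$1*x$2*x$4*x$5^2*x$7 + 4*x$1*x$2*x$4*x$5*x$6^2 + 12*x$1*x$2*x$4*x$5*x$7^2 + 12*x$1*x$2*x$4*x$5*x$8^2 + 4*x$1*x$2*x$4*x$5*x$9^2 + 4*x$1*x$2*x$4*x$6^2*x$7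 + 4*x$1*x$2*x$4*x$7^3 + 12*x$1*x$2*x$4*x$7*x$8^2 + 4*x$1*x$2*x$4*x$7*x$9^2 - 4*x$1*x$2*x$5^3*x$8 - 12*x$1*x$2*x$5^2*x$7*x$8 - 4*x$1*x$2*x$5*x$6^2*x$8 - 12*x$1*x$2*x$5*x$7^2*x$8 - 4*x$1*x$2*x$5*x$8^3 - 4*x$1*x$2*x$5*x$8*x$9^2 - 4*x$1*x$2*x$6^2*x$7*x$8 - 4*x$1*x$2*x$7^3*x$8 - 4*x$1*x$2*x$7*x$8^3 - 4*x$1*x$2*x$7*x$8*x$9^2 - 4*x$1*x$4^4*x$9*e1 + 8*x$1*x$4^3*x$5*x$6*e1 + 8*x$1*x$4^3*x$6*x$7*e1 + 16*x$1*x$4^3*x$8*x$9*e1 - 24*x$1*x$4^2*x$5*x$6*x$8*e1 - 4*x$1*x$4^2*x$6^2*x$9*e1 - 24*x$1*x$4^2*x$6*x$7*x$8*e1 - 24*x$1*x$4^2*x$8^2*x$9*e1 - 4*x$1*x$4^2*x$9^3*e1 - 4*x$1*x$4^2*x$9*e1*r + 8*x$1*x$4*x$5^3*x$6*e1 + 24*x$1*x$4*x$5^2*x$6*x$7*e1 + 8*x$1*x$4*x$5*x$6^3*e1 + 24*x$1*x$4*x$5*x$6*x$7^2*e1 + 24*x$1*x$4*x$5*x$6*x$8^2*e1 + 8*x$1*x$4*x$5*x$6*x$9^2*e1 + 8*x$1*x$4*x$6^3*x$7*e1 + 8*x$1*x$4*x$6^2*x$8*x$9*e1 + 8*x$1*x$4*x$6*x$7^3*e1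 + 24*x$1*x$4*x$6*x$7*x$8^2*e1 + 8*x$1*x$4*x$6*x$7*x$9^2*e1 + 16*x$1*x$4*x$8^3*x$9*e1 + 8*x$1*x$4*x$8*x$9^3*e1 + 8*x$1*x$4*x$8*x$9*e1*r + 4*x$1*x$5^4*x$9*e1 - 8*x$1*x$5^3*x$6*x$8*e1 + 16*x$1*x$5^3*x$7*x$9*e1 + 4*x$1*x$5^2*x$6^2*x$9*e1 - 24*x$1*x$5^2*x$6*x$7*x$8*e1 + 24*x$1*x$5^2*x$7^2*x$9*e1 + 4*x$1*x$5^2*x$9^3*e1 - 4*x$1*x$5^2*x$9*e1*r - 8*x$1*x$5*x$6^3*x$8*e1 + 8*x$1*x$5*x$6^2*x$7*x$9*e1 - 24*x$1*x$5*x$6*x$7^2*x$8*e1 - 8*x$1*x$5*x$6*x$8^3*e1 - 8*x$1*x$5*x$6*x$8*x$9^2*e1 + 16*x$1*x$5*x$7^3*x$9*e1 + 8*x$1*x$5*x$7*x$9^3*e1 - 8*x$1*x$5*x$7*x$9*e1*r - 8*x$1*x$6^3*x$7*x$8*e1 + 4*x$1*x$6^2*x$7^2*x$9*e1 - 4*x$1*x$6^2*x$8^2*x$9*e1 - 8*x$1*x$6*x$7^3*x$8*e1 - 8*x$1*x$6*x$7*x$8^3*e1 - 8*x$1*x$6*x$7*x$8*x$9^2*e1 + 4*x$1*x$7^4*x$9*e1 + 4*x$1*x$7^2*x$9^3*e1 - 4*x$1*x$7^2*x$9*e1*r - 4*x$1*x$8^4*x$9*e1 - 4*x$1*x$8^2*x$9^3*e1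 - 4*x$1*x$8^2*x$9*e1*r - x$2^2*x$4^4 + 4*x$2^2*x$4^3*x$8 - x$2^2*x$4^2*x$6^2 - 6*x$2^2*x$4^2*x$8^2 - x$2^2*x$4^2*x$9^2 + x$2^2*x$4^2*r + 2*x$2^2*x$4*x$6^2*x$8 + 4*x$2^2*x$4*x$8^3 + 2*x$2^2*x$4*x$8*x$9^2 - 2*x$2^2*x$4*x$8*r + x$2^2*x$5^4 + 4*x$2^2*x$5^3*x$7 + x$2^2*x$5^2*x$6^2 + 6*x$2^2*x$5^2*x$7^2 + x$2^2*x$5^2*x$9^2 + x$2^2*x$5^2*r + 2*x$2^2*x$5*x$6^2*x$7 + 4*x$2^2*x$5*x$7^3 + 2*x$2^2*x$5*x$7*x$9^2 + 2*x$2^2*x$5*x$7*r + x$2^2*x$6^2*x$7^2 - x$2^2*x$6^2*x$8^2 + x$2^2*x$7^4 + x$2^2*x$7^2*x$9^2 + x$2^2*x$7^2*r - x$2^2*x$8^4 - x$2^2*x$8^2*x$9^2 + x$2^2*x$8^2*r - 4*x$2*x$4^4*x$6*e1 - 8*x$2*x$4^3*x$5*x$9*e1 + 16*x$2*x$4^3*x$6*x$8*e1 - 8*x$2*x$4^3*x$7*x$9*e1 + 24*x$2*x$4^2*x$5*x$8*x$9*e1 - 4*x$2*x$4^2*x$6^3*e1 - 24*x$2*x$4^2*x$6*x$8^2*e1 - 4*x$2*x$4^2*x$6*x$9^2*e1 + 4*x$2*x$4^2*x$6*e1*r + 24*x$2*x$4^2*x$7*x$8*x$9*e1 - 8*x$2*x$4*x$5^3*x$9*e1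 - 24*x$2*x$4*x$5^2*x$7*x$9*e1 - 8*x$2*x$4*x$5*x$6^2*x$9*e1 - 24*x$2*x$4*x$5*x$7^2*x$9*e1 - 24*x$2*x$4*x$5*x$8^2*x$9*e1 - 8*x$2*x$4*x$5*x$9^3*e1 + 8*x$2*x$4*x$6^3*x$8*e1 - 8*x$2*x$4*x$6^2*x$7*x$9*e1 + 16*x$2*x$4*x$6*x$8^3*e1 + 8*x$2*x$4*x$6*x$8*x$9^2*e1 - 8*x$2*x$4*x$6*x$8*e1*r - 8*x$2*x$4*x$7^3*x$9*e1 - 24*x$2*x$4*x$7*x$8^2*x$9*e1 - 8*x$2*x$4*x$7*x$9^3*e1 + 4*x$2*x$5^4*x$6*e1 + 16*x$2*x$5^3*x$6*x$7*e1 + 8*x$2*x$5^3*x$8*x$9*e1 + 4*x$2*x$5^2*x$6^3*e1 + 24*x$2*x$5^2*x$6*x$7^2*e1 + 4*x$2*x$5^2*x$6*x$9^2*e1 + 4*x$2*x$5^2*x$6*e1*r + 24*x$2*x$5^2*x$7*x$8*x$9*e1 + 8*x$2*x$5*x$6^3*x$7*e1 + 8*x$2*x$5*x$6^2*x$8*x$9*e1 + 16*x$2*x$5*x$6*x$7^3*e1 + 8*x$2*x$5*x$6*x$7*x$9^2*e1 + 8*x$2*x$5*x$6*x$7*e1*r + 24*x$2*x$5*x$7^2*x$8*x$9*e1 + 8*x$2*x$5*x$8^3*x$9*e1 + 8*x$2*x$5*x$8*x$9^3*e1 + 4*x$2*x$6^3*x$7^2*e1 - 4*x$2*x$6^3*x$8^2*e1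 + 8*x$2*x$6^2*x$7*x$8*x$9*e1 + 4*x$2*x$6*x$7^4*e1 + 4*x$2*x$6*x$7^2*x$9^2*e1 + 4*x$2*x$6*x$7^2*e1*r - 4*x$2*x$6*x$8^4*e1 - 4*x$2*x$6*x$8^2*x$9^2*e1 + 4*x$2*x$6*x$8^2*e1*r + 8*x$2*x$7^3*x$8*x$9*e1 + 8*x$2*x$7*x$8^3*x$9*e1 + 8*x$2*x$7*x$8*x$9^3*e1 - 4*x$3*x$4^4*x$5*e1 - 4*x$3*x$4^4*x$7*e1 + 16*x$3*x$4^3*x$5*x$8*e1 + 16*x$3*x$4^3*x$7*x$8*e1 - 8*x$3*x$4^2*x$5^3*e1 - 24*x$3*x$4^2*x$5^2*x$7*e1 - 4*x$3*x$4^2*x$5*x$6^2*e1 - 24*x$3*x$4^2*x$5*x$7^2*e1 - 24*x$3*x$4^2*x$5*x$8^2*e1 - 4*x$3*x$4^2*x$5*x$9^2*e1 - 4*x$3*x$4^2*x$6^2*x$7*e1 - 8*x$3*x$4^2*x$7^3*e1 - 24*x$3*x$4^2*x$7*x$8^2*e1 - 4*x$3*x$4^2*x$7*x$9^2*e1 + 16*x$3*x$4*x$5^3*x$8*e1 + 48*x$3*x$4*x$5^2*x$7*x$8*e1 + 8*x$3*x$4*x$5*x$6^2*x$8*e1 + 48*x$3*x$4*x$5*x$7^2*x$8*e1 + 16*x$3*x$4*x$5*x$8^3*e1 + 8*x$3*x$4*x$5*x$8*x$9^2*e1 + 8*x$3*x$4*x$6^2*x$7*x$8*e1 + 16*x$3*x$4*x$7^3*x$8*e1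 + 16*x$3*x$4*x$7*x$8^3*e1 + 8*x$3*x$4*x$7*x$8*x$9^2*e1 - 4*x$3*x$5^5*e1 - 20*x$3*x$5^4*x$7*e1 - 4*x$3*x$5^3*x$6^2*e1 - 40*x$3*x$5^3*x$7^2*e1 - 8*x$3*x$5^3*x$8^2*e1 - 4*x$3*x$5^3*x$9^2*e1 - 12*x$3*x$5^2*x$6^2*x$7*e1 - 40*x$3*x$5^2*x$7^3*e1 - 24*x$3*x$5^2*x$7*x$8^2*e1 - 12*x$3*x$5^2*x$7*x$9^2*e1 - 12*x$3*x$5*x$6^2*x$7^2*e1 - 4*x$3*x$5*x$6^2*x$8^2*e1 - 20*x$3*x$5*x$7^4*e1 - 24*x$3*x$5*x$7^2*x$8^2*e1 - 12*x$3*x$5*x$7^2*x$9^2*e1 - 4*x$3*x$5*x$8^4*e1 - 4*x$3*x$5*x$8^2*x$9^2*e1 - 4*x$3*x$6^2*x$7^3*e1 - 4*x$3*x$6^2*x$7*x$8^2*e1 - 4*x$3*x$7^5*e1 - 8*x$3*x$7^3*x$8^2*e1 - 4*x$3*x$7^3*x$9^2*e1 - 4*x$3*x$7*x$8^4*e1 - 4*x$3*x$7*x$8^2*x$9^2*e1 + 4*x$4^5*e0 - 20*x$4^4*x$8*e0 + 8*x$4^3*x$5^2*e0 + 16*x$4^3*x$5*x$7*e0 + 4*x$4^3*x$6^2*e0 + 8*x$4^3*x$7^2*e0 + 40*x$4^3*x$8^2*e0 + 4*x$4^3*x$9^2*e0 - 24*x$4^2*x$5^2*x$8*e0 + 8*x$4^2*x$5^2*e1^2*r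 - 48*x$4^2*x$5*x$7*x$8*e0 + 16*x$4^2*x$5*x$7*e1^2*r - 12*x$4^2*x$6^2*x$8*e0 - 24*x$4^2*x$7^2*x$8*e0 + 8*x$4^2*x$7^2*e1^2*r - 40*x$4^2*x$8^3*e0 - 12*x$4^2*x$8*x$9^2*e0 + 4*x$4*x$5^4*e0 + 16*x$4*x$5^3*x$7*e0 + 4*x$4*x$5^2*x$6^2*e0 + 24*x$4*x$5^2*x$7^2*e0 + 24*x$4*x$5^2*x$8^2*e0 - 16*x$4*x$5^2*x$8*e1^2*r + 4*x$4*x$5^2*x$9^2*e0 + 8*x$4*x$5*x$6^2*x$7*e0 + 16*x$4*x$5*x$7^3*e0 + 48*x$4*x$5*x$7*x$8^2*e0 - 32*x$4*x$5*x$7*x$8*e1^2*r + 8*x$4*x$5*x$7*x$9^2*e0 + 4*x$4*x$6^2*x$7^2*e0 + 12*x$4*x$6^2*x$8^2*e0 + 4*x$4*x$7^4*e0 + 24*x$4*x$7^2*x$8^2*e0 - 16*x$4*x$7^2*x$8*e1^2*r + 4*x$4*x$7^2*x$9^2*e0 + 20*x$4*x$8^4*e0 + 12*x$4*x$8^2*x$9^2*e0 - 4*x$5^4*x$8*e0 + 8*x$5^4*e1^2*r - 16*x$5^3*x$7*x$8*e0 + 32*x$5^3*x$7*e1^2*r - 4*x$5^2*x$6^2*x$8*e0 + 8*x$5^2*x$6^2*e1^2*r - 24*x$5^2*x$7^2*x$8*e0 + 48*x$5^2*x$7^2*e1^2*r - 8*x$5^2*x$8^3*e0 + 8*x$5^2*x$8^2*e1^2*r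 - 4*x$5^2*x$8*x$9^2*e0 + 8*x$5^2*x$9^2*e1^2*r - 8*x$5*x$6^2*x$7*x$8*e0 + 16*x$5*x$6^2*x$7*e1^2*r - 16*x$5*x$7^3*x$8*e0 + 32*x$5*x$7^3*e1^2*r - 16*x$5*x$7*x$8^3*e0 + 16*x$5*x$7*x$8^2*e1^2*r - 8*x$5*x$7*x$8*x$9^2*e0 + 16*x$5*x$7*x$9^2*e1^2*r - 4*x$6^2*x$7^2*x$8*e0 + 8*x$6^2*x$7^2*e1^2*r - 4*x$6^2*x$8^3*e0 - 4*x$7^4*x$8*e0 + 8*x$7^4*e1^2*r - 8*x$7^2*x$8^3*e0 + 8*x$7^2*x$8^2*e1^2*r - 4*x$7^2*x$8*x$9^2*e0 + 8*x$7^2*x$9^2*e1^2*r - 4*x$8^5*e0 - 4*x$8^3*x$9^2*e0)"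

definition D1S :: "real \<Rightarrow> real \<Rightarrow> real \<Rightarrow> real^9 \<Rightarrow> real" where
  "D1S e0 e1 r x = (0 - x$1^2*x$4^2 + 2*x$1^2*x$4*x$8 - x$1^2*x$5^2 - 2*x$1^2*x$5*x$7 - x$1^2*x$7^2 - x$1^2*x$8^2 - 8*x$1*x$4*x$5*x$6*e1 - 8*x$1*x$4*x$6*x$7*e1 + 8*x$1*x$5^2*x$9*e1 + 8*x$1*x$5*x$6*x$8*e1 + 16*x$1*x$5*x$7*x$9*e1 + 8*x$1*x$6*x$7*x$8*e1 + 8*x$1*x$7^2*x$9*e1 - x$2^2*x$4^2 + 2*x$2^2*x$4*x$8 - x$2^2*x$5^2 - 2*x$2^2*x$5*x$7 - x$2^2*x$7^2 - x$2^2*x$8^2 - 8*x$2*x$4*x$5*x$9*e1 - 8*x$2*x$4*x$7*x$9*e1 - 8*x$2*x$5^2*x$6*e1 - 16*x$2*x$5*x$6*x$7*e1 + 8*x$2*x$5*x$8*x$9*e1 - 8*x$2*x$6*x$7^2*e1 + 8*x$2*x$7*x$8*x$9*e1 - 8*x$5^2*x$6^2*e1^2 - 8*x$5^2*x$9^2*e1^2 - 16*x$5*x$6^2*x$7*e1^2 - 16*x$5*x$7*x$9^2*e1^2 - 8*x$6^2*x$7^2*e1^2 - 8*x$7^2*x$9^2*e1^2)"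

definition E1S :: "real \<Rightarrow> real \<Rightarrow> real \<Rightarrow> real^9 \<Rightarrow> real" where
  "E1S e0 e1 r x = (2*x$1*x$4^3*x$6 - 2*x$1*x$4^2*x$5*x$9 - 6*x$1*x$4^2*x$6*x$8 - 2*x$1*x$4^2*x$7*x$9 + 2*x$1*x$4*x$5^2*x$6 + 4*x$1*x$4*x$5*x$6*x$7 + 4*x$1*x$4*x$5*x$8*x$9 + 2*x$1*x$4*x$6*x$7^2 + 6*x$1*x$4*x$6*x$8^2 + 4*x$1*x$4*x$7*x$8*x$9 - 2*x$1*x$5^3*x$9 - 2*x$1*x$5^2*x$6*x$8 - 6*x$1*x$5^2*x$7*x$9 - 4*x$1*x$5*x$6*x$7*x$8 - 6*x$1*x$5*x$7^2*x$9 - 2*x$1*x$5*x$8^2*x$9 - 2*x$1*x$6*x$7^2*x$8 - 2*x$1*x$6*x$8^3 - 2*x$1*x$7^3*x$9 - 2*x$1*x$7*x$8^2*x$9 + 2*x$2*x$4^3*x$9 + 2*x$2*x$4^2*x$5*x$6 + 2*x$2*x$4^2*x$6*x$7 - 6*x$2*x$4^2*x$8*x$9 + 2*x$2*x$4*x$5^2*x$9 - 4*x$2*x$4*x$5*x$6*x$8 + 4*x$2*x$4*x$5*x$7*x$9 - 4*x$2*x$4*x$6*x$7*x$8 + 2*x$2*x$4*x$7^2*x$9 + 6*x$2*x$4*x$8^2*x$9 + 2*x$2*x$5^3*x$6 + 6*x$2*x$5^2*x$6*x$7 - 2*x$2*x$5^2*x$8*x$9 + 6*x$2*x$5*x$6*x$7^2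 + 2*x$2*x$5*x$6*x$8^2 - 4*x$2*x$5*x$7*x$8*x$9 + 2*x$2*x$6*x$7^3 + 2*x$2*x$6*x$7*x$8^2 - 2*x$2*x$7^2*x$8*x$9 - 2*x$2*x$8^3*x$9 + 4*x$4^2*x$5*x$6^2*e1 + 4*x$4^2*x$5*x$9^2*e1 + 4*x$4^2*x$6^2*x$7*e1 + 4*x$4^2*x$7*x$9^2*e1 - 8*x$4*x$5*x$6^2*x$8*e1 - 8*x$4*x$5*x$8*x$9^2*e1 - 8*x$4*x$6^2*x$7*x$8*e1 - 8*x$4*x$7*x$8*x$9^2*e1 + 4*x$5^3*x$6^2*e1 + 4*x$5^3*x$9^2*e1 + 12*x$5^2*x$6^2*x$7*e1 + 12*x$5^2*x$7*x$9^2*e1 + 12*x$5*x$6^2*x$7^2*e1 + 4*x$5*x$6^2*x$8^2*e1 + 12*x$5*x$7^2*x$9^2*e1 + 4*x$5*x$8^2*x$9^2*e1 + 4*x$6^2*x$7^3*e1 + 4*x$6^2*x$7*x$8^2*e1 + 4*x$7^3*x$9^2*e1 + 4*x$7*x$8^2*x$9^2*e1)"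

definition Q3S :: "real \<Rightarrow> real \<Rightarrow> real \<Rightarrow> real^9 \<Rightarrow> real" where
  "Q3S e0 e1 r x = (8*x$1*x$4^3*x$5*x$9*e1 + 8*x$1*x$4^3*x$7*x$9*e1 + 8*x$1*x$4^2*x$5^2*x$6*e1 + 16*x$1*x$4^2*x$5*x$6*x$7*e1 - 24*x$1*x$4^2*x$5*x$8*x$9*e1 + 8*x$1*x$4^2*x$6*x$7^2*e1 - 24*x$1*x$4^2*x$7*x$8*x$9*e1 + 8*x$1*x$4*x$5^3*x$9*e1 - 16*x$1*x$4*x$5^2*x$6*x$8*e1 + 24*x$1*x$4*x$5^2*x$7*x$9*e1 - 32*x$1*x$4*x$5*x$6*x$7*x$8*e1 + 24*x$1*x$4*x$5*x$7^2*x$9*e1 + 24*x$1*x$4*x$5*x$8^2*x$9*e1 - 16*x$1*x$4*x$6*x$7^2*x$8*e1 + 8*x$1*x$4*x$7^3*x$9*e1 + 24*x$1*x$4*x$7*x$8^2*x$9*e1 + 8*x$1*x$5^4*x$6*e1 + 32*x$1*x$5^3*x$6*x$7*e1 - 8*x$1*x$5^3*x$8*x$9*e1 + 48*x$1*x$5^2*x$6*x$7^2*e1 + 8*x$1*x$5^2*x$6*x$8^2*e1 - 24*x$1*x$5^2*x$7*x$8*x$9*e1 + 32*x$1*x$5*x$6*x$7^3*e1 + 16*x$1*x$5*x$6*x$7*x$8^2*e1 - 24*x$1*x$5*x$7^2*x$8*x$9*e1 - 8*x$1*x$5*x$8^3*x$9*e1 + 8*x$1*x$6*x$7^4*e1 +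 8*x$1*x$6*x$7^2*x$8^2*e1 - 8*x$1*x$7^3*x$8*x$9*e1 - 8*x$1*x$7*x$8^3*x$9*e1 - 8*x$2*x$4^3*x$5*x$6*e1 - 8*x$2*x$4^3*x$6*x$7*e1 + 8*x$2*x$4^2*x$5^2*x$9*e1 + 24*x$2*x$4^2*x$5*x$6*x$8*e1 + 16*x$2*x$4^2*x$5*x$7*x$9*e1 + 24*x$2*x$4^2*x$6*x$7*x$8*e1 + 8*x$2*x$4^2*x$7^2*x$9*e1 - 8*x$2*x$4*x$5^3*x$6*e1 - 24*x$2*x$4*x$5^2*x$6*x$7*e1 - 16*x$2*x$4*x$5^2*x$8*x$9*e1 - 24*x$2*x$4*x$5*x$6*x$7^2*e1 - 24*x$2*x$4*x$5*x$6*x$8^2*e1 - 32*x$2*x$4*x$5*x$7*x$8*x$9*e1 - 8*x$2*x$4*x$6*x$7^3*e1 - 24*x$2*x$4*x$6*x$7*x$8^2*e1 - 16*x$2*x$4*x$7^2*x$8*x$9*e1 + 8*x$2*x$5^4*x$9*e1 + 8*x$2*x$5^3*x$6*x$8*e1 + 32*x$2*x$5^3*x$7*x$9*e1 + 24*x$2*x$5^2*x$6*x$7*x$8*e1 + 48*x$2*x$5^2*x$7^2*x$9*e1 + 8*x$2*x$5^2*x$8^2*x$9*e1 + 24*x$2*x$5*x$6*x$7^2*x$8*e1 + 8*x$2*x$5*x$6*x$8^3*e1 + 32*x$2*x$5*x$7^3*x$9*e1 + 16*x$2*x$5*x$7*x$8^2*x$9*e1 + 8*x$2*x$6*x$7^3*x$8*e1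 + 8*x$2*x$6*x$7*x$8^3*e1 + 8*x$2*x$7^4*x$9*e1 + 8*x$2*x$7^2*x$8^2*x$9*e1)"

definition frS :: "real \<Rightarrow> real \<Rightarrow> real \<Rightarrow> real^9 \<Rightarrow> real" where
  "frS e0 e1 r x = (0 - 2*x$5*e1 - 2*x$7*e1)"

definition dfS :: "real \<Rightarrow> real \<Rightarrow> real \<Rightarrow> real^9 \<Rightarrow> real^9 \<Rightarrow> real" where
  "dfS e0 e1 r x v = v$1 * (0 - x$4*x$6 - x$5*x$9 + x$6*x$8 - x$7*x$9) + v$2 * (x$4*x$9 - x$5*x$6 - x$6*x$7 - x$8*x$9) + v$3 * (x$4^2 - 2*x$4*x$8 + x$5^2 + 2*x$5*x$7 + x$7^2 + x$8^2) + v$4 * (0 - x$1*x$6 + x$2*x$9 + 2*x$3*x$4 - 2*x$3*x$8) + v$5 * (0 - x$1*x$9 - x$2*x$6 + 2*x$3*x$5 + 2*x$3*x$7 - 2*e1*r) + v$6 * (0 - x$1*x$4 + x$1*x$8 - x$2*x$5 - x$2*x$7) + v$7 * (0 - x$1*x$9 - x$2*x$6 + 2*x$3*x$5 + 2*x$3*x$7 - 2*e1*r) + v$8 * (x$1*x$6 - x$2*x$9 - 2*x$3*x$4 + 2*x$3*x$8) + v$9 * (0 - x$1*x$5 - x$1*x$7 + x$2*x$4 - x$2*x$8)"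

definition dgS :: "real \<Rightarrow> real \<Rightarrow> real \<Rightarrow> real^9 \<Rightarrow> real^9 \<Rightarrow> real" where
  "dgS e0 e1 r x v = v$1 * (0 - 2*x$1*x$4*x$5 - 2*x$1*x$4*x$7 + 2*x$1*x$5*x$8 + 2*x$1*x$7*x$8 + x$2*x$4^2 - 2*x$2*x$4*x$8 - x$2*x$5^2 - 2*x$2*x$5*x$7 - x$2*x$7^2 + x$2*x$8^2 + 2*x$4^2*x$6*e1 + 4*x$4*x$5*x$9*e1 - 4*x$4*x$6*x$8*e1 + 4*x$4*x$7*x$9*e1 - 2*x$5^2*x$6*e1 - 4*x$5*x$6*x$7*e1 - 4*x$5*x$8*x$9*e1 - 2*x$6*x$7^2*e1 + 2*x$6*x$8^2*e1 - 4*x$7*x$8*x$9*e1) + v$2 * (x$1*x$4^2 - 2*x$1*x$4*x$8 - x$1*x$5^2 - 2*x$1*x$5*x$7 - x$1*x$7^2 + x$1*x$8^2 + 2*x$2*x$4*x$5 + 2*x$2*x$4*x$7 - 2*x$2*x$5*x$8 - 2*x$2*x$7*x$8 - 2*x$4^2*x$9*e1 + 4*x$4*x$5*x$6*e1 + 4*x$4*x$6*x$7*e1 + 4*x$4*x$8*x$9*e1 + 2*x$5^2*x$9*e1 - 4*x$5*x$6*x$8*e1 + 4*x$5*x$7*x$9*e1 - 4*x$6*x$7*x$8*e1 + 2*x$7^2*x$9*e1 - 2*x$8^2*x$9*e1) + v$3 * (0 - 2*x$4^3*e1 + 6*x$4^2*x$8*e1 - 2*x$4*x$5^2*e1 - 4*x$4*x$5*x$7*e1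 - 2*x$4*x$7^2*e1 - 6*x$4*x$8^2*e1 + 2*x$5^2*x$8*e1 + 4*x$5*x$7*x$8*e1 + 2*x$7^2*x$8*e1 + 2*x$8^3*e1) + v$4 * (0 - x$1^2*x$5 - x$1^2*x$7 + 2*x$1*x$2*x$4 - 2*x$1*x$2*x$8 + 4*x$1*x$4*x$6*e1 + 4*x$1*x$5*x$9*e1 - 4*x$1*x$6*x$8*e1 + 4*x$1*x$7*x$9*e1 + x$2^2*x$5 + x$2^2*x$7 - 4*x$2*x$4*x$9*e1 + 4*x$2*x$5*x$6*e1 + 4*x$2*x$6*x$7*e1 + 4*x$2*x$8*x$9*e1 - 6*x$3*x$4^2*e1 + 12*x$3*x$4*x$8*e1 - 2*x$3*x$5^2*e1 - 4*x$3*x$5*x$7*e1 - 2*x$3*x$7^2*e1 - 6*x$3*x$8^2*e1 - 4*x$4*x$5*e0 - 4*x$4*x$7*e0 + 4*x$5*x$8*e0 + 4*x$5*e1^2*r + 4*x$7*x$8*e0 + 4*x$7*e1^2*r) + v$5 * (0 - x$1^2*x$4 + x$1^2*x$8 - 2*x$1*x$2*x$5 - 2*x$1*x$2*x$7 + 4*x$1*x$4*x$9*e1 - 4*x$1*x$5*x$6*e1 - 4*x$1*x$6*x$7*e1 - 4*x$1*x$8*x$9*e1 + x$2^2*x$4 - x$2^2*x$8 + 4*x$2*x$4*x$6*e1 + 4*x$2*x$5*x$9*e1 - 4*x$2*x$6*x$8*e1 + 4*x$2*x$7*x$9*e1 - 4*x$3*x$4*x$5*e1 - 4*x$3*x$4*x$7*e1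 + 4*x$3*x$5*x$8*e1 + 4*x$3*x$7*x$8*e1 - 2*x$4^2*e0 + 4*x$4*x$8*e0 + 4*x$4*e1^2*r - 6*x$5^2*e0 - 12*x$5*x$7*e0 - 6*x$7^2*e0 - 2*x$8^2*e0 - 4*x$8*e1^2*r) + v$6 * (2*x$1*x$4^2*e1 - 4*x$1*x$4*x$8*e1 - 2*x$1*x$5^2*e1 - 4*x$1*x$5*x$7*e1 - 2*x$1*x$7^2*e1 + 2*x$1*x$8^2*e1 + 4*x$2*x$4*x$5*e1 + 4*x$2*x$4*x$7*e1 - 4*x$2*x$5*x$8*e1 - 4*x$2*x$7*x$8*e1) + v$7 * (0 - x$1^2*x$4 + x$1^2*x$8 - 2*x$1*x$2*x$5 - 2*x$1*x$2*x$7 + 4*x$1*x$4*x$9*e1 - 4*x$1*x$5*x$6*e1 - 4*x$1*x$6*x$7*e1 - 4*x$1*x$8*x$9*e1 + x$2^2*x$4 - x$2^2*x$8 + 4*x$2*x$4*x$6*e1 + 4*x$2*x$5*x$9*e1 - 4*x$2*x$6*x$8*e1 + 4*x$2*x$7*x$9*e1 - 4*x$3*x$4*x$5*e1 - 4*x$3*x$4*x$7*e1 + 4*x$3*x$5*x$8*e1 + 4*x$3*x$7*x$8*e1 - 2*x$4^2*e0 + 4*x$4*x$8*e0 + 4*x$4*e1^2*r - 6*x$5^2*e0 - 12*x$5*x$7*e0 - 6*x$7^2*e0 - 2*x$8^2*e0 - 4*x$8*e1^2*r) + v$8 * (x$1^2*x$5 + x$1^2*x$7 - 2*x$1*x$2*x$4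 + 2*x$1*x$2*x$8 - 4*x$1*x$4*x$6*e1 - 4*x$1*x$5*x$9*e1 + 4*x$1*x$6*x$8*e1 - 4*x$1*x$7*x$9*e1 - x$2^2*x$5 - x$2^2*x$7 + 4*x$2*x$4*x$9*e1 - 4*x$2*x$5*x$6*e1 - 4*x$2*x$6*x$7*e1 - 4*x$2*x$8*x$9*e1 + 6*x$3*x$4^2*e1 - 12*x$3*x$4*x$8*e1 + 2*x$3*x$5^2*e1 + 4*x$3*x$5*x$7*e1 + 2*x$3*x$7^2*e1 + 6*x$3*x$8^2*e1 + 4*x$4*x$5*e0 + 4*x$4*x$7*e0 - 4*x$5*x$8*e0 - 4*x$5*e1^2*r - 4*x$7*x$8*e0 - 4*x$7*e1^2*r) + v$9 * (4*x$1*x$4*x$5*e1 + 4*x$1*x$4*x$7*e1 - 4*x$1*x$5*x$8*e1 - 4*x$1*x$7*x$8*e1 - 2*x$2*x$4^2*e1 + 4*x$2*x$4*x$8*e1 + 2*x$2*x$5^2*e1 + 4*x$2*x$5*x$7*e1 + 2*x$2*x$7^2*e1 - 2*x$2*x$8^2*e1)"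

definition dpmS :: "real \<Rightarrow> real \<Rightarrow> real \<Rightarrow> real^9 \<Rightarrow> real^9 \<Rightarrow> real" where
  "dpmS e0 e1 r x v = v$1 * (2*x$1*x$4^2 - 4*x$1*x$4*x$8 - 2*x$1*x$5^2 - 4*x$1*x$5*x$7 - 2*x$1*x$7^2 + 2*x$1*x$8^2 + 4*x$2*x$4*x$5 + 4*x$2*x$4*x$7 - 4*x$2*x$5*x$8 - 4*x$2*x$7*x$8 - 4*x$4^2*x$9*e1 + 8*x$4*x$5*x$6*e1 + 8*x$4*x$6*x$7*e1 + 8*x$4*x$8*x$9*e1 + 4*x$5^2*x$9*e1 - 8*x$5*x$6*x$8*e1 + 8*x$5*x$7*x$9*e1 - 8*x$6*x$7*x$8*e1 + 4*x$7^2*x$9*e1 - 4*x$8^2*x$9*e1) + v$2 * (4*x$1*x$4*x$5 + 4*x$1*x$4*x$7 - 4*x$1*x$5*x$8 - 4*x$1*x$7*x$8 - 2*x$2*x$4^2 + 4*x$2*x$4*x$8 + 2*x$2*x$5^2 + 4*x$2*x$5*x$7 + 2*x$2*x$7^2 - 2*x$2*x$8^2 - 4*x$4^2*x$6*e1 - 8*x$4*x$5*x$9*e1 + 8*x$4*x$6*x$8*e1 - 8*x$4*x$7*x$9*e1 + 4*x$5^2*x$6*e1 + 8*x$5*x$6*x$7*e1 + 8*x$5*x$8*x$9*e1 + 4*x$6*x$7^2*e1 - 4*x$6*x$8^2*e1 + 8*x$7*x$8*x$9*e1) + v$3 * (0 - 4*x$4^2*x$5*e1 - 4*x$4^2*x$7*e1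 + 8*x$4*x$5*x$8*e1 + 8*x$4*x$7*x$8*e1 - 4*x$5^3*e1 - 12*x$5^2*x$7*e1 - 12*x$5*x$7^2*e1 - 4*x$5*x$8^2*e1 - 4*x$7^3*e1 - 4*x$7*x$8^2*e1) + v$4 * (2*x$1^2*x$4 - 2*x$1^2*x$8 + 4*x$1*x$2*x$5 + 4*x$1*x$2*x$7 - 8*x$1*x$4*x$9*e1 + 8*x$1*x$5*x$6*e1 + 8*x$1*x$6*x$7*e1 + 8*x$1*x$8*x$9*e1 - 2*x$2^2*x$4 + 2*x$2^2*x$8 - 8*x$2*x$4*x$6*e1 - 8*x$2*x$5*x$9*e1 + 8*x$2*x$6*x$8*e1 - 8*x$2*x$7*x$9*e1 - 8*x$3*x$4*x$5*e1 - 8*x$3*x$4*x$7*e1 + 8*x$3*x$5*x$8*e1 + 8*x$3*x$7*x$8*e1 + 12*x$4^2*e0 - 24*x$4*x$8*e0 - 8*x$4*e1^2*r + 4*x$5^2*e0 + 8*x$5*x$7*e0 + 4*x$7^2*e0 + 12*x$8^2*e0 + 8*x$8*e1^2*r) + v$5 * (0 - 2*x$1^2*x$5 - 2*x$1^2*x$7 + 4*x$1*x$2*x$4 - 4*x$1*x$2*x$8 + 8*x$1*x$4*x$6*e1 + 8*x$1*x$5*x$9*e1 - 8*x$1*x$6*x$8*e1 + 8*x$1*x$7*x$9*e1 + 2*x$2^2*x$5 + 2*x$2^2*x$7 - 8*x$2*x$4*x$9*e1 + 8*x$2*x$5*x$6*e1 + 8*x$2*x$6*x$7*e1 + 8*x$2*x$8*x$9*e1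 - 4*x$3*x$4^2*e1 + 8*x$3*x$4*x$8*e1 - 12*x$3*x$5^2*e1 - 24*x$3*x$5*x$7*e1 - 12*x$3*x$7^2*e1 - 4*x$3*x$8^2*e1 + 8*x$4*x$5*e0 + 8*x$4*x$7*e0 - 8*x$5*x$8*e0 + 8*x$5*e1^2*r - 8*x$7*x$8*e0 + 8*x$7*e1^2*r) + v$6 * (8*x$1*x$4*x$5*e1 + 8*x$1*x$4*x$7*e1 - 8*x$1*x$5*x$8*e1 - 8*x$1*x$7*x$8*e1 - 4*x$2*x$4^2*e1 + 8*x$2*x$4*x$8*e1 + 4*x$2*x$5^2*e1 + 8*x$2*x$5*x$7*e1 + 4*x$2*x$7^2*e1 - 4*x$2*x$8^2*e1) + v$7 * (0 - 2*x$1^2*x$5 - 2*x$1^2*x$7 + 4*x$1*x$2*x$4 - 4*x$1*x$2*x$8 + 8*x$1*x$4*x$6*e1 + 8*x$1*x$5*x$9*e1 - 8*x$1*x$6*x$8*e1 + 8*x$1*x$7*x$9*e1 + 2*x$2^2*x$5 + 2*x$2^2*x$7 - 8*x$2*x$4*x$9*e1 + 8*x$2*x$5*x$6*e1 + 8*x$2*x$6*x$7*e1 + 8*x$2*x$8*x$9*e1 - 4*x$3*x$4^2*e1 + 8*x$3*x$4*x$8*e1 - 12*x$3*x$5^2*e1 - 24*x$3*x$5*x$7*e1 - 12*x$3*x$7^2*e1 - 4*x$3*x$8^2*e1 + 8*x$4*x$5*e0 + 8*x$4*x$7*e0 - 8*x$5*x$8*e0 + 8*x$5*e1^2*r - 8*x$7*x$8*e0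 + 8*x$7*e1^2*r) + v$8 * (0 - 2*x$1^2*x$4 + 2*x$1^2*x$8 - 4*x$1*x$2*x$5 - 4*x$1*x$2*x$7 + 8*x$1*x$4*x$9*e1 - 8*x$1*x$5*x$6*e1 - 8*x$1*x$6*x$7*e1 - 8*x$1*x$8*x$9*e1 + 2*x$2^2*x$4 - 2*x$2^2*x$8 + 8*x$2*x$4*x$6*e1 + 8*x$2*x$5*x$9*e1 - 8*x$2*x$6*x$8*e1 + 8*x$2*x$7*x$9*e1 + 8*x$3*x$4*x$5*e1 + 8*x$3*x$4*x$7*e1 - 8*x$3*x$5*x$8*e1 - 8*x$3*x$7*x$8*e1 - 12*x$4^2*e0 + 24*x$4*x$8*e0 + 8*x$4*e1^2*r - 4*x$5^2*e0 - 8*x$5*x$7*e0 - 4*x$7^2*e0 - 12*x$8^2*e0 - 8*x$8*e1^2*r) + v$9 * (0 - 4*x$1*x$4^2*e1 + 8*x$1*x$4*x$8*e1 + 4*x$1*x$5^2*e1 + 8*x$1*x$5*x$7*e1 + 4*x$1*x$7^2*e1 - 4*x$1*x$8^2*e1 - 8*x$2*x$4*x$5*e1 - 8*x$2*x$4*x$7*e1 + 8*x$2*x$5*x$8*e1 + 8*x$2*x$7*x$8*e1)"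

definition NS :: "real^9 \<Rightarrow> real" where "NS x = (x$4 - x$8)^2 + (x$5 + x$7)^2"
definition RS :: "real^9 \<Rightarrow> real" where "RS x = x$4^2 + x$5^2 + x$6^2 - x$7^2 - x$8^2 - x$9^2"
definition ABS :: "real^9 \<Rightarrow> real" where "ABS x = x$4*x$7 + x$5*x$8 + x$6*x$9"

definition sgradform :: "real^9 \<Rightarrow> (9 \<Rightarrow> real) \<Rightarrow> real^9" where
"sgradform x G = vector [x$2*G 3 - x$3*G 2 + x$5*G 6 - x$6*G 5 + x$8*G 9 - x$9*G 8,
 x$3*G 1 - x$1*G 3 + x$6*G 4 - x$4*G 6 + x$9*G 7 - x$7*G 9,
 x$1*G 2 - x$2*G 1 + x$4*G 5 - x$5*G 4 + x$7*G 8 - x$8*G 7,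
 x$5*G 3 - x$6*G 2, x$6*G 1 - x$4*G 3, x$4*G 2 - x$5*G 1,
 x$8*G 3 - x$9*G 2, x$9*G 1 - x$7*G 3, x$7*G 2 - x$8*G 1]"

lemma vec9_eqI:
  fixes u v :: "real^9"
  assumes "u$1 = v$1" "u$2 = v$2" "u$3 = v$3" "u$4 = v$4" "u$5 = v$5" "u$6 = v$6"
    "u$7 = v$7" "u$8 = v$8" "u$9 = v$9"
  shows "u = v"
  unfolding vec_eq_iff
proof
  fix i :: 9
  show "u$i = v$i" using exhaust_9[of i] assms by auto
qed

lemma sgrad_eq: "sgrad Phi x = sgradform x (\<lambda>i. pd Phi i x)"
  by (rule vec9_eqI) (simp_all add: sgrad_def sgradform_def Mv_def alv_def bev_def cross3_def Let_def vector_def algebra_simps)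

lemma sgradform_lin:
  "sgradform x (\<lambda>i. a * X i + b * Y i) = a *\<^sub>R sgradform x X + b *\<^sub>R sgradform x Y"
  by (rule vec9_eqI) (simp_all add: sgradform_def vector_def algebra_simps)

lemma sgradform_antisym:
  "(\<chi> i. X i) \<bullet> sgradform x Y = - ((\<chi> i. Y i) \<bullet> sgradform x X)"
  by (simp add: sgradform_def vector_def inner_vec_def sum_9 algebra_simps)

lemma sgradform_self:
  "(\<chi> i. X i) \<bullet> sgradform x X = 0"
  using sgradform_antisym[of X x X] by simp

lemma matrix_entry:
  fixes P Q U W :: "real^'n"
  shows "matrix (\<lambda>v. (P \<bullet> v) *\<^sub>R U + (Q \<bullet> v) *\<^sub>R W) $ i $ j = P$j * U$i + Q$j * W$i"
  by (simp add: matrix_def inner_axis)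

lemma trace_lemma:
  fixes P Q U W :: "real^9"
  shows "trace (matrix (\<lambda>v. (P \<bullet> v) *\<^sub>R U + (Q \<bullet> v) *\<^sub>R W) ** matrix (\<lambda>v. (P \<bullet> v) *\<^sub>R U + (Q \<bullet> v) *\<^sub>R W))
     = (P \<bullet> U)^2 + 2 * (P \<bullet> W) * (Q \<bullet> U) + (Q \<bullet> W)^2"
  apply (simp only: trace_def matrix_matrix_mult_def vec_lambda_beta matrix_entry)
  apply (simp only: inner_vec_def sum_9 inner_real_def)
  apply algebra
  done

lemma core_x:
  "NS x * (2 * ((\<chi> i. dgS e0 e1 r x (axis i 1)) \<bullet> sgradform x (\<lambda>i. dfS e0 e1 r x (axis i 1))) - PLS e0 e1 r x)
   = E1S e0 e1 r x * fS e0 e1 r x + (NS x * D1S e0 e1 r x - E1S e0 e1 r x * frS e0 e1 r x) * (r - RS x)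
     + Q3S e0 e1 r x * ABS x"
  apply (simp only: inner_vec_def sum_9 vec_lambda_beta inner_real_def)
  apply (simp add: sgradform_def vector_def dgS_def dfS_def axis_def)
  apply (simp only: NS_def RS_def ABS_def E1S_def fS_def D1S_def frS_def Q3S_def PLS_def)
  apply algebra
  done

lemma deriv_fS: "(fS e0 e1 r has_derivative dfS e0 e1 r x) (at x)"
  unfolding fS_def[abs_def]
  apply (rule has_derivative_eq_rhs)
   apply (rule derivative_intros)+
  apply (rule ext)
  apply (simp add: dfS_def)
  apply algebra
  done

lemma deriv_gS: "(gS e0 e1 r has_derivative dgS e0 e1 r x) (at x)"
  unfolding gS_def[abs_def]
  apply (rule has_derivative_eq_rhs)
   apply (rule derivative_intros)+
  apply (rule ext)
  apply (simp add: dgS_def)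
  apply algebra
  done

lemma deriv_pmS: "(pmS e0 e1 r has_derivative dpmS e0 e1 r x) (at x)"
  unfolding pmS_def[abs_def]
  apply (rule has_derivative_eq_rhs)
   apply (rule derivative_intros)+
  apply (rule ext)
  apply (simp add: dpmS_def)
  apply algebra
  done

lemma KN: "cx1 x * cx2 x = of_real (NS x)"
  by (simp add: complex_eq_iff cx1_def cx2_def NS_def power2_eq_square algebra_simps)

lemma KZ: "cz1 x * cz2 x = of_real (x$6^2 + x$9^2)"
  by (simp add: complex_eq_iff cz1_def cz2_def power2_eq_square algebra_simps)

lemma KQ: "(cw1 x + \<i> * of_real e1 * cz1 x) * (cw2 x - \<i> * of_real e1 * cz2 x)
   = of_real (((x$1 - 2*e1*x$9)^2 + (x$2 + 2*e1*x$6)^2) / 4)"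
  by (simp add: complex_eq_iff cw1_def cw2_def cz1_def cz2_def power2_eq_square field_simps)

lemma Kcsq: "csq x = of_real (sqrt (NS x))"
  by (simp add: csq_def cx1_def NS_def norm_complex_def)

lemma K1: "cx1 x * cx2 x * cw3 x - (cx2 x * cz1 x * cw1 x + cx1 x * cz2 x * cw2 x)
   + \<i> * of_real e1 * of_real (a\<^sup>2 - b\<^sup>2) * (cx1 x - cx2 x) = of_real (fS e0 e1 (a\<^sup>2 - b\<^sup>2) x)"
proof -
  define u1 where "u1 = x$1/2"
  define u2 where "u2 = x$2/2"
  have u: "x$1 = 2*u1" "x$2 = 2*u2" by (simp_all add: u1_def u2_def)
  show ?thesis
    apply (rule complex_eqI)
     apply (simp_all add: u cx1_def cx2_def cw1_def cw2_def cw3_def cz1_def cz2_def fS_def power2_eq_square)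
     apply algebra+
    done
qed

lemma K2: "cx2 x ^ 2 * xi1 a b e0 e1 x - cx1 x ^ 2 * xi2 a b e0 e1 x = \<i> * of_real (gS e0 e1 (a\<^sup>2 - b\<^sup>2) x)"
proof -
  define u1 where "u1 = x$1/2"
  define u2 where "u2 = x$2/2"
  have u: "x$1 = 2*u1" "x$2 = 2*u2" by (simp_all add: u1_def u2_def)
  show ?thesis
    apply (rule complex_eqI)
     apply (simp_all add: u cx1_def cx2_def cw1_def cw2_def cw3_def cz1_def cz2_def xi1_def xi2_def gS_def power2_eq_square)
     apply algebra+
    done
qed

lemma K3: "cx2 x ^ 2 * xi1 a b e0 e1 x + cx1 x ^ 2 * xi2 a b e0 e1 x = of_real (pmS e0 e1 (a\<^sup>2 - b\<^sup>2) x / 2)"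
proof -
  define u1 where "u1 = x$1/2"
  define u2 where "u2 = x$2/2"
  have u: "x$1 = 2*u1" "x$2 = 2*u2" by (simp_all add: u1_def u2_def)
  show ?thesis
    apply (rule complex_eqI)
     apply (simp_all add: u cx1_def cx2_def cw1_def cw2_def cw3_def cz1_def cz2_def xi1_def xi2_def pmS_def power2_eq_square)
     apply algebra+
    done
qed

lemma PL_poly: "PLS e0 e1 r x = r*NS x*((x$1 - 2*e1*x$9)^2 + (x$2 + 2*e1*x$6)^2)
   + (NS x + (x$6^2 + x$9^2)) * pmS e0 e1 r x + 4*e1^2*r*NS x^2"
  unfolding PLS_def NS_def pmS_def by algebra

lemma nz12: assumes "NS x \<noteq> 0" shows "cx1 x \<noteq> 0" "cx2 x \<noteq> 0"
  using KN[of x] assms by auto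

lemma rho_facts: assumes "NS x \<noteq> 0"
  shows "sqrt (NS x) \<noteq> 0" "sqrt (NS x) * sqrt (NS x) = NS x" "NS x > 0"
proof -
  have "NS x \<ge> 0" by (simp add: NS_def)
  then show "NS x > 0" using assms by simp
  then show "sqrt (NS x) \<noteq> 0" "sqrt (NS x) * sqrt (NS x) = NS x" by simp_all
qed

lemma FF_eq: assumes "NS x \<noteq> 0"
  shows "FF a b e0 e1 x = of_real (fS e0 e1 (a\<^sup>2 - b\<^sup>2) x / sqrt (NS x))"
proof -
  define \<rho> where "\<rho> = sqrt (NS x)"
  have r0: "complex_of_real \<rho> \<noteq> 0" using rho_facts[OF assms] by (simp add: \<rho>_def)
  have e: "complex_of_real \<rho> * complex_of_real \<rho> = cx1 x * cx2 x"
    using rho_facts[OF assms] by (simp add: KN \<rho>_def flip: of_real_mult)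
  have k: "complex_of_real \<rho> * complex_of_real \<rho> * cw3 x
      - (cx2 x * cz1 x * cw1 x + cx1 x * cz2 x * cw2 x)
      + \<i> * of_real e1 * of_real (a\<^sup>2 - b\<^sup>2) * (cx1 x - cx2 x) = of_real (fS e0 e1 (a\<^sup>2 - b\<^sup>2) x)"
    by (subst e) (rule K1)
  have "FF a b e0 e1 x = (complex_of_real \<rho> * complex_of_real \<rho> * cw3 x
      - (cx2 x * cz1 x * cw1 x + cx1 x * cz2 x * cw2 x)
      + \<i> * of_real e1 * of_real (a\<^sup>2 - b\<^sup>2) * (cx1 x - cx2 x)) / complex_of_real \<rho>"
    unfolding FF_def Kcsq \<rho>_def[symmetric] using r0 by (simp add: field_simps)
  also have "\<dots> = of_real (fS e0 e1 (a\<^sup>2 - b\<^sup>2) x) / complex_of_real \<rho>"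
    by (subst k) (rule refl)
  also have "\<dots> = of_real (fS e0 e1 (a\<^sup>2 - b\<^sup>2) x / \<rho>)"
    by simp
  finally show ?thesis by (simp add: \<rho>_def)
qed

lemma FF1_eq: assumes "NS x \<noteq> 0"
  shows "FF1 a b e0 e1 x = \<i> * of_real (gS e0 e1 (a\<^sup>2 - b\<^sup>2) x / NS x)"
proof -
  have n: "cx1 x \<noteq> 0" "cx2 x \<noteq> 0" using nz12[OF assms] by auto
  have "FF1 a b e0 e1 x = (cx2 x ^ 2 * xi1 a b e0 e1 x - cx1 x ^ 2 * xi2 a b e0 e1 x) / (cx1 x * cx2 x)"
    unfolding FF1_def using n by (simp add: field_simps power2_eq_square)
  also have "\<dots> = \<i> * of_real (gS e0 e1 (a\<^sup>2 - b\<^sup>2) x) / of_real (NS x)"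
    unfolding K2 KN by simp
  finally show ?thesis by simp
qed

lemma MMc_eq: assumes "NS x \<noteq> 0" "a\<^sup>2 - b\<^sup>2 \<noteq> 0"
  shows "MMc a b e0 e1 x = of_real (pmS e0 e1 (a\<^sup>2 - b\<^sup>2) x / (4 * (a\<^sup>2 - b\<^sup>2) * NS x) + e1\<^sup>2)"
proof -
  define r where "r = a\<^sup>2 - b\<^sup>2"
  have n: "cx1 x \<noteq> 0" "cx2 x \<noteq> 0" using nz12[OF assms(1)] by auto
  have "r \<noteq> 0" using assms(2) by (simp add: r_def)
  then have rn: "complex_of_real r \<noteq> 0" "complex_of_real (NS x) \<noteq> 0" using assms(1) by simp_all
  have "MMc a b e0 e1 x = 1 / (2 * of_real r) * ((cx2 x ^ 2 * xi1 a b e0 e1 x + cx1 x ^ 2 * xi2 a b e0 e1 x) / (cx1 x * cx2 x)) + of_real (e1\<^sup>2)"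
    unfolding MMc_def r_def[symmetric] using n by (simp add: field_simps power2_eq_square)
  also have "\<dots> = 1 / (2 * of_real r) * (of_real (pmS e0 e1 r x / 2) / of_real (NS x)) + of_real (e1\<^sup>2)"
    unfolding K3 KN r_def ..
  also have "\<dots> = of_real (pmS e0 e1 r x / (4 * r * NS x) + e1\<^sup>2)"
    using rn by (simp add: field_simps)
  finally show ?thesis by (simp add: r_def)
qed

lemma LLc_eq: assumes "NS x \<noteq> 0" "a\<^sup>2 - b\<^sup>2 \<noteq> 0"
  shows "LLc a b e0 e1 x = of_real (PLS e0 e1 (a\<^sup>2 - b\<^sup>2) x / (4 * (a\<^sup>2 - b\<^sup>2) * NS x * sqrt (NS x)))"
proof -
  define \<rho> where "\<rho> = sqrt (NS x)"
  define r where "r = a\<^sup>2 - b\<^sup>2"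
  have rf: "\<rho> \<noteq> 0" "\<rho> * \<rho> = NS x" using rho_facts[OF assms(1)] by (simp_all add: \<rho>_def)
  have rn: "r \<noteq> 0" "NS x \<noteq> 0" using assms by (simp_all add: r_def)
  have c: "complex_of_real \<rho> \<noteq> 0" "complex_of_real r \<noteq> 0" "complex_of_real (NS x) \<noteq> 0"
    using rf rn by simp_all
  have c2: "complex_of_real \<rho> * complex_of_real \<rho> = complex_of_real (NS x)"
    using rf(2) by (simp flip: of_real_mult)
  have m: "MMc a b e0 e1 x - of_real (e1\<^sup>2) = of_real (pmS e0 e1 r x) / (4 * of_real r * of_real (NS x))"
    unfolding MMc_eq[OF assms] r_def[symmetric] by simp
  have "LLc a b e0 e1 x = 1 / of_real \<rho> * (of_real (((x$1 - 2*e1*x$9)^2 + (x$2 + 2*e1*x$6)^2) / 4)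
      + (of_real (NS x) + of_real (x$6^2 + x$9^2)) * (of_real (pmS e0 e1 r x) / (4 * of_real r * of_real (NS x))))
      + of_real (e1\<^sup>2) * of_real \<rho>"
    unfolding LLc_def KQ m Kcsq \<rho>_def[symmetric] KN KZ by simp
  also have "\<dots> = of_real (1 / \<rho> * (((x$1 - 2*e1*x$9)^2 + (x$2 + 2*e1*x$6)^2) / 4
      + (NS x + (x$6^2 + x$9^2)) * (pmS e0 e1 r x / (4 * r * NS x))) + e1\<^sup>2 * \<rho>)"
    using c2 by simp
  also have "\<dots> = of_real (PLS e0 e1 r x / (4 * r * NS x * \<rho>))"
    apply (rule arg_cong[where f=complex_of_real])
    unfolding PL_poly using rf rn
    by (simp add: field_simps power2_eq_square)
  finally show ?thesis by (simp add: \<rho>_def r_def)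
qed

definition Kf :: "real \<Rightarrow> real^9 \<Rightarrow> real" where "Kf r x = inverse (4 * r * (NS x)^2)"

lemma Phi2_eq: assumes "NS x \<noteq> 0" "a\<^sup>2 - b\<^sup>2 \<noteq> 0" "r = a\<^sup>2 - b\<^sup>2"
  shows "Phi2 a b e0 e1 x = - (gS e0 e1 r x * (r * gS e0 e1 r x) + fS e0 e1 r x * (fS e0 e1 r x * pmS e0 e1 r x)) * Kf r x"
proof -
  have rf: "sqrt (NS x) \<noteq> 0" "sqrt (NS x) * sqrt (NS x) = NS x" using rho_facts[OF assms(1)] by simp_all
  have "Phi2c a b e0 e1 x = of_real (- ((gS e0 e1 r x / NS x)^2) / 4
      - (fS e0 e1 r x / sqrt (NS x))^2 * (pmS e0 e1 r x / (4 * r * NS x)))"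
    unfolding Phi2c_def FF_eq[OF assms(1)] FF1_eq[OF assms(1)] MMc_eq[OF assms(1,2)] assms(3)
    by (simp add: power_mult_distrib power_divide)
  then have "Phi2 a b e0 e1 x = - ((gS e0 e1 r x / NS x)^2) / 4
      - (fS e0 e1 r x / sqrt (NS x))^2 * (pmS e0 e1 r x / (4 * r * NS x))"
    by (simp add: Phi2_def)
  also have "\<dots> = - (gS e0 e1 r x * (r * gS e0 e1 r x) + fS e0 e1 r x * (fS e0 e1 r x * pmS e0 e1 r x)) * Kf r x"
    using rf assms unfolding Kf_def by (simp add: field_simps power2_eq_square)
  finally show ?thesis .
qed

definition dNS :: "real^9 \<Rightarrow> real^9 \<Rightarrow> real" where
  "dNS x v = 2 * (x$4 - x$8) * (v$4 - v$8) + 2 * (x$5 + x$7) * (v$5 + v$7)"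

definition dKf :: "real \<Rightarrow> real^9 \<Rightarrow> real^9 \<Rightarrow> real" where
  "dKf r x v = - dNS x v / (2 * r * (NS x)^3)"

definition Aa :: "real \<Rightarrow> real \<Rightarrow> real \<Rightarrow> real^9 \<Rightarrow> real^9 \<Rightarrow> real" where
  "Aa e0 e1 r x v = - (2 * r * dgS e0 e1 r x v) * Kf r x - r * gS e0 e1 r x * dKf r x v"

definition Bb :: "real \<Rightarrow> real \<Rightarrow> real \<Rightarrow> real^9 \<Rightarrow> real^9 \<Rightarrow> real" where
  "Bb e0 e1 r x v = - (2 * pmS e0 e1 r x * dfS e0 e1 r x v + fS e0 e1 r x * dpmS e0 e1 r x v) * Kf r x
      - fS e0 e1 r x * pmS e0 e1 r x * dKf r x v"

lemma deriv_NS: "(NS has_derivative dNS x) (at x)"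
  unfolding NS_def[abs_def]
  apply (rule has_derivative_eq_rhs)
   apply (rule derivative_intros)+
  apply (rule ext)
  apply (simp add: dNS_def)
  apply algebra
  done

lemma deriv_Kf: assumes "NS x \<noteq> 0" "r \<noteq> 0"
  shows "(Kf r has_derivative dKf r x) (at x)"
  unfolding Kf_def[abs_def]
  apply (rule has_derivative_eq_rhs)
   apply (rule Deriv.has_derivative_inverse)
    using assms apply simp
   apply (rule derivative_intros deriv_NS)+
  apply (rule ext)
  using assms apply (simp add: dKf_def field_simps power2_eq_square power3_eq_cube)
  done

lemma Phi_deriv: assumes "NS x \<noteq> 0" "a\<^sup>2 - b\<^sup>2 \<noteq> 0" "r = a\<^sup>2 - b\<^sup>2"
  shows "(Phi2 a b e0 e1 has_derivative (\<lambda>v. gS e0 e1 r x * Aa e0 e1 r x v + fS e0 e1 r x * Bb e0 e1 r x v)) (at x)"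
proof -
  have r0: "r \<noteq> 0" using assms by simp
  have d: "((\<lambda>y. - (gS e0 e1 r y * (r * gS e0 e1 r y) + fS e0 e1 r y * (fS e0 e1 r y * pmS e0 e1 r y)) * Kf r y)
      has_derivative (\<lambda>v. gS e0 e1 r x * Aa e0 e1 r x v + fS e0 e1 r x * Bb e0 e1 r x v)) (at x)"
    apply (rule has_derivative_eq_rhs)
     apply (rule derivative_intros deriv_gS deriv_fS deriv_pmS deriv_Kf[OF assms(1) r0])+
    apply (rule ext)
    apply (simp add: Aa_def Bb_def)
    apply algebra
    done
  have o: "open {y. NS y \<noteq> 0}"
    by (rule open_Collect_neq) (simp_all add: NS_def[abs_def] continuous_intros)
  show ?thesis
    apply (rule has_derivative_transform_within_open[OF d o])
    using assms Phi2_eq by auto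
qed

lemma pd_eq: assumes "NS x \<noteq> 0" "a\<^sup>2 - b\<^sup>2 \<noteq> 0" "r = a\<^sup>2 - b\<^sup>2"
  shows "pd (Phi2 a b e0 e1) i x = gS e0 e1 r x * Aa e0 e1 r x (axis i 1) + fS e0 e1 r x * Bb e0 e1 r x (axis i 1)"
  unfolding pd_def frechet_derivative_at[OF Phi_deriv[OF assms], symmetric] by simp

lemma vec_has_derivative_I:
  fixes f f' :: "real^9 \<Rightarrow> real^9"
  assumes "\<And>j. ((\<lambda>x. f x $ j) has_derivative (\<lambda>v. f' v $ j)) (at s)"
  shows "(f has_derivative f') (at s)"
proof -
  have "\<forall>i\<in>Basis. ((\<lambda>x. f x \<bullet> i) has_derivative (\<lambda>x. f' x \<bullet> i)) (at s)"
  proof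
    fix i :: "real^9" assume "i \<in> Basis"
    then obtain j where j: "i = axis j 1" by (auto simp: Basis_vec_def)
    show "((\<lambda>x. f x \<bullet> i) has_derivative (\<lambda>x. f' x \<bullet> i)) (at s)"
      using assms[of j] unfolding j by (simp add: inner_axis)
  qed
  then show ?thesis using has_derivative_componentwise_within[of f f' s UNIV] by simp
qed

lemma sgradform_deriv:
  assumes d: "\<And>i. (G i has_derivative dG i) (at s)" and z: "\<And>i. G i s = 0"
  shows "((\<lambda>x. sgradform x (\<lambda>i. G i x)) has_derivative (\<lambda>v. sgradform s (\<lambda>i. dG i v))) (at s)"
proof (rule vec_has_derivative_I)
  fix j :: 9
  show "((\<lambda>x. sgradform x (\<lambda>i. G i x) $ j) has_derivative (\<lambda>v. sgradform s (\<lambda>i. dG i v) $ j)) (at s)"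
    using exhaust_9[of j]
    apply (elim disjE)
            apply (simp_all add: sgradform_def vector_def)
            apply (rule has_derivative_eq_rhs, (rule d derivative_intros)+, simp add: z algebra_simps)+
    done
qed

lemma deriv_zero_mult:
  fixes u h :: "real^9 \<Rightarrow> real"
  assumes "(u has_derivative du) (at s)" "u s = 0" "h differentiable (at s)"
  shows "((\<lambda>x. u x * h x) has_derivative (\<lambda>v. du v * h s)) (at s)"
proof -
  obtain dh where "(h has_derivative dh) (at s)" using assms(3) differentiable_def by blast
  from has_derivative_mult[OF assms(1) this] show ?thesis using assms(2) by simp
qed

lemma diff_poly_NS [simp]: "(\<lambda>x. NS x) differentiable (at s within S)"
  by (simp add: NS_def)

lemma diff_gS [simp]: "(\<lambda>x. gS e0 e1 r x) differentiable (at s)"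
  using deriv_gS differentiableI by blast
lemma diff_fS [simp]: "(\<lambda>x. fS e0 e1 r x) differentiable (at s)"
  using deriv_fS differentiableI by blast
lemma diff_pmS [simp]: "(\<lambda>x. pmS e0 e1 r x) differentiable (at s)"
  using deriv_pmS differentiableI by blast
lemma diff_dgS [simp]: "(\<lambda>x. dgS e0 e1 r x e) differentiable (at s)"
  unfolding dgS_def by simp
lemma diff_dfS [simp]: "(\<lambda>x. dfS e0 e1 r x e) differentiable (at s)"
  unfolding dfS_def by simp
lemma diff_dpmS [simp]: "(\<lambda>x. dpmS e0 e1 r x e) differentiable (at s)"
  unfolding dpmS_def by simp
lemma diff_Kf: assumes "NS s \<noteq> 0" "r \<noteq> 0" shows "(\<lambda>x. Kf r x) differentiable (at s)"
  using deriv_Kf[OF assms] differentiableI by blast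
lemma diff_dKf: assumes "NS s \<noteq> 0" "r \<noteq> 0" shows "(\<lambda>x. dKf r x e) differentiable (at s)"
  unfolding dKf_def dNS_def using assms by simp

lemma Aa_diff: assumes "NS s \<noteq> 0" "r \<noteq> 0"
  shows "(\<lambda>x. Aa e0 e1 r x e) differentiable (at s)"
  unfolding Aa_def using diff_Kf[OF assms] diff_dKf[OF assms] by simp

lemma Bb_diff: assumes "NS s \<noteq> 0" "r \<noteq> 0"
  shows "(\<lambda>x. Bb e0 e1 r x e) differentiable (at s)"
  unfolding Bb_def using diff_Kf[OF assms] diff_dKf[OF assms] by simp

lemma dgS_inner: "dgS e0 e1 r x v = (\<chi> i. dgS e0 e1 r x (axis i 1)) \<bullet> v"
  by (simp add: dgS_def inner_vec_def sum_9 axis_def algebra_simps)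

lemma dfS_inner: "dfS e0 e1 r x v = (\<chi> i. dfS e0 e1 r x (axis i 1)) \<bullet> v"
  by (simp add: dfS_def inner_vec_def sum_9 axis_def algebra_simps)

lemma P6_iff: "x \<in> P6 a b \<longleftrightarrow> x$4^2 + x$5^2 + x$6^2 = a^2 \<and> x$7^2 + x$8^2 + x$9^2 = b^2 \<and> ABS x = 0"
  by (simp add: P6_def alv_def bev_def inner_vec_def sum_3 ABS_def power2_eq_square)

theorem theorem5:
  fixes a b e0 e1 :: real and s :: "real^9"
  assumes "a > b" and "b > 0" and "e0 \<ge> 0"
    and "s \<in> M2 a b e0 e1" and "cx1 s * cx2 s \<noteq> 0"
  shows "C_Phi (Phi2 a b e0 e1) s
           = - 4 * (a\<^sup>2 - b\<^sup>2)\<^sup>2 * (MMr a b e0 e1 s - e1\<^sup>2) * (LLr a b e0 e1 s)\<^sup>2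
      \<and> ((MMr a b e0 e1 s = e1\<^sup>2 \<or> LLr a b e0 e1 s = 0) \<longrightarrow> outer_degenerate (Phi2 a b e0 e1) s)
      \<and> ((LLr a b e0 e1 s \<noteq> 0 \<and> MMr a b e0 e1 s > e1\<^sup>2) \<longrightarrow> outer_center (Phi2 a b e0 e1) s)
      \<and> ((LLr a b e0 e1 s \<noteq> 0 \<and> MMr a b e0 e1 s < e1\<^sup>2) \<longrightarrow> outer_saddle (Phi2 a b e0 e1) s)"
proof -
  define r where "r = a\<^sup>2 - b\<^sup>2"
  have "b\<^sup>2 < a\<^sup>2" using assms(1,2) by (simp add: power_strict_mono)
  then have rpos: "r > 0" by (simp add: r_def)
  then have r0: "r \<noteq> 0" "a\<^sup>2 - b\<^sup>2 \<noteq> 0" by (simp_all add: r_def)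
  have N0: "NS s \<noteq> 0" using assms(5) KN[of s] by auto
  have openU: "open {y. NS y \<noteq> 0}"
    by (rule open_Collect_neq) (simp_all add: NS_def[abs_def] continuous_intros)
  define T where "T = {x. fS e0 e1 r x = 0} \<inter> {x. gS e0 e1 r x = 0} \<inter> P6 a b"
  have cf: "continuous_on UNIV (fS e0 e1 r)"
    by (rule differentiable_imp_continuous_on, rule differentiable_at_imp_differentiable_on)
       (use deriv_fS differentiableI in blast)
  have cg: "continuous_on UNIV (gS e0 e1 r)"
    by (rule differentiable_imp_continuous_on, rule differentiable_at_imp_differentiable_on)
       (use deriv_gS differentiableI in blast)
  have P6e: "P6 a b = {x. x$4^2 + x$5^2 + x$6^2 = a^2} \<inter> {x. x$7^2 + x$8^2 + x$9^2 = b^2} \<inter> {x. ABS x = 0}"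
    by (auto simp: P6_iff)
  have cP6: "closed (P6 a b)"
    unfolding P6e ABS_def
    by (intro closed_Int closed_Collect_eq continuous_intros)
  have closedT: "closed T"
    unfolding T_def
    by (intro closed_Int cP6 closed_Collect_eq cf cg continuous_intros)
  have ST: "{x \<in> P6 a b. cx1 x * cx2 x \<noteq> 0 \<and> FF a b e0 e1 x = 0 \<and> FF1 a b e0 e1 x = 0} \<subseteq> T"
  proof
    fix x assume x: "x \<in> {x \<in> P6 a b. cx1 x * cx2 x \<noteq> 0 \<and> FF a b e0 e1 x = 0 \<and> FF1 a b e0 e1 x = 0}"
    then have Nx: "NS x \<noteq> 0" using KN[of x] by auto
    have "fS e0 e1 r x / sqrt (NS x) = 0" using x FF_eq[OF Nx, of a b e0 e1] by (simp add: r_def)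
    then have "fS e0 e1 r x = 0" using rho_facts[OF Nx] by simp
    moreover have "gS e0 e1 r x / NS x = 0" using x FF1_eq[OF Nx, of a b e0 e1] by (simp add: r_def)
    then have "gS e0 e1 r x = 0" using Nx by simp
    ultimately show "x \<in> T" using x by (simp add: T_def)
  qed
  have "s \<in> T" using assms(4) closure_minimal[OF ST closedT] unfolding M2_def by blast
  then have f0: "fS e0 e1 r s = 0" and g0: "gS e0 e1 r s = 0" and sP: "s \<in> P6 a b"
    by (simp_all add: T_def)
  have RS0: "RS s = r" and AB0: "ABS s = 0" using sP by (simp_all add: P6_iff RS_def r_def)
  define G where "G = (\<lambda>i x. gS e0 e1 r x * Aa e0 e1 r x (axis i 1) + fS e0 e1 r x * Bb e0 e1 r x (axis i 1))"
  define dG where "dG = (\<lambda>i v. dgS e0 e1 r s v * Aa e0 e1 r s (axis i 1) + dfS e0 e1 r s v * Bb e0 e1 r s (axis i 1))"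
  have dGi: "(G i has_derivative dG i) (at s)" for i
    unfolding G_def dG_def
    by (rule has_derivative_add[OF deriv_zero_mult[OF deriv_gS g0 Aa_diff[OF N0 r0(1)]]
          deriv_zero_mult[OF deriv_fS f0 Bb_diff[OF N0 r0(1)]]])
  have G0: "G i s = 0" for i by (simp add: G_def f0 g0)
  have D1: "((\<lambda>x. sgradform x (\<lambda>i. G i x)) has_derivative (\<lambda>v. sgradform s (\<lambda>i. dG i v))) (at s)"
    by (rule sgradform_deriv[OF dGi G0])
  have eqU: "sgradform y (\<lambda>i. G i y) = sgrad (Phi2 a b e0 e1) y" if "y \<in> {y. NS y \<noteq> 0}" for y
    using that unfolding sgrad_eq G_def by (simp add: pd_eq[OF _ r0(2) r_def])
  have D2: "(sgrad (Phi2 a b e0 e1) has_derivative (\<lambda>v. sgradform s (\<lambda>i. dG i v))) (at s)"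
    by (rule has_derivative_transform_within_open[OF D1 openU]) (use N0 eqU in auto)
  have A: "A_lin (Phi2 a b e0 e1) s = matrix (\<lambda>v. sgradform s (\<lambda>i. dG i v))"
    unfolding A_lin_def frechet_derivative_at[OF D2, symmetric] ..
  define P where "P = (\<chi> i. dgS e0 e1 r s (axis i 1))"
  define Q where "Q = (\<chi> i. dfS e0 e1 r s (axis i 1))"
  define c1 where "c1 = - (2 * r * Kf r s)"
  define c2 where "c2 = - (2 * pmS e0 e1 r s * Kf r s)"
  define SFg where "SFg = sgradform s (\<lambda>i. dgS e0 e1 r s (axis i 1))"
  define SFf where "SFf = sgradform s (\<lambda>i. dfS e0 e1 r s (axis i 1))"
  have Aas: "Aa e0 e1 r s e = c1 * dgS e0 e1 r s e" for e by (simp add: Aa_def c1_def g0)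
  have Bbs: "Bb e0 e1 r s e = c2 * dfS e0 e1 r s e" for e by (simp add: Bb_def c2_def f0)
  have Dform: "(\<lambda>v. sgradform s (\<lambda>i. dG i v)) = (\<lambda>v. (P \<bullet> v) *\<^sub>R (c1 *\<^sub>R SFg) + (Q \<bullet> v) *\<^sub>R (c2 *\<^sub>R SFf))"
  proof (rule ext)
    fix v
    have pv: "dgS e0 e1 r s v = P \<bullet> v" unfolding P_def by (rule dgS_inner)
    have qv: "dfS e0 e1 r s v = Q \<bullet> v" unfolding Q_def by (rule dfS_inner)
    have "(\<lambda>i. dG i v) = (\<lambda>i. (c1 * dgS e0 e1 r s v) * dgS e0 e1 r s (axis i 1) + (c2 * dfS e0 e1 r s v) * dfS e0 e1 r s (axis i 1))"
      unfolding dG_def Aas Bbs by (simp add: algebra_simps)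
    then have "sgradform s (\<lambda>i. dG i v) = (c1 * dgS e0 e1 r s v) *\<^sub>R SFg + (c2 * dfS e0 e1 r s v) *\<^sub>R SFf"
      unfolding SFg_def SFf_def by (simp add: sgradform_lin)
    then show "sgradform s (\<lambda>i. dG i v) = (P \<bullet> v) *\<^sub>R (c1 *\<^sub>R SFg) + (Q \<bullet> v) *\<^sub>R (c2 *\<^sub>R SFf)"
      unfolding pv qv by (simp add: mult.commute)
  qed
  define B where "B = P \<bullet> SFf"
  have PU: "P \<bullet> SFg = 0" unfolding P_def SFg_def by (rule sgradform_self)
  have QW: "Q \<bullet> SFf = 0" unfolding Q_def SFf_def by (rule sgradform_self)
  have QU: "Q \<bullet> SFg = - B" unfolding B_def Q_def SFg_def P_def SFf_def by (rule sgradform_antisym)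
  have C1: "C_Phi (Phi2 a b e0 e1) s = - c1 * c2 * B^2"
    unfolding C_Phi_def A Dform trace_lemma
    by (simp add: PU QW QU B_def[symmetric] power2_eq_square)
  have "NS s * (2 * B - PLS e0 e1 r s) = 0"
    using core_x[of s e0 e1 r] unfolding B_def P_def SFf_def by (simp add: f0 RS0 AB0)
  then have B2: "2 * B = PLS e0 e1 r s" using N0 by simp
  define \<rho> where "\<rho> = sqrt (NS s)"
  have rf: "\<rho> \<noteq> 0" "\<rho> * \<rho> = NS s" using rho_facts[OF N0] by (simp_all add: \<rho>_def)
  have MM: "MMr a b e0 e1 s - e1\<^sup>2 = pmS e0 e1 r s / (4 * r * NS s)"
    unfolding MMr_def MMc_eq[OF N0 r0(2)] r_def by simp
  have LL: "LLr a b e0 e1 s = PLS e0 e1 r s / (4 * r * NS s * \<rho>)"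
    unfolding LLr_def LLc_eq[OF N0 r0(2)] r_def \<rho>_def by simp
  have Cval: "C_Phi (Phi2 a b e0 e1) s
      = - 4 * (a\<^sup>2 - b\<^sup>2)\<^sup>2 * (MMr a b e0 e1 s - e1\<^sup>2) * (LLr a b e0 e1 s)\<^sup>2"
  proof -
    have "C_Phi (Phi2 a b e0 e1) s = - c1 * c2 * (PLS e0 e1 r s / 2)^2"
      unfolding C1 B2[symmetric] by simp
    also have "\<dots> = - 4 * r\<^sup>2 * (pmS e0 e1 r s / (4 * r * NS s)) * (PLS e0 e1 r s / (4 * r * NS s * \<rho>))\<^sup>2"
      unfolding c1_def c2_def Kf_def using rf r0 N0
      by (simp add: field_simps power2_eq_square)
    finally show ?thesis unfolding MM LL r_def .
  qed
  define m where "m = MMr a b e0 e1 s - e1\<^sup>2"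
  define l where "l = LLr a b e0 e1 s"
  have Cm: "C_Phi (Phi2 a b e0 e1) s = - (4 * r\<^sup>2 * l\<^sup>2) * m"
    unfolding Cval m_def l_def r_def by simp
  have kpos: "l \<noteq> 0 \<Longrightarrow> 4 * r\<^sup>2 * l\<^sup>2 > 0" using rpos by simp
  show ?thesis
  proof (intro conjI impI)
    show "C_Phi (Phi2 a b e0 e1) s = - 4 * (a\<^sup>2 - b\<^sup>2)\<^sup>2 * (MMr a b e0 e1 s - e1\<^sup>2) * (LLr a b e0 e1 s)\<^sup>2"
      by (rule Cval)
  next
    assume "MMr a b e0 e1 s = e1\<^sup>2 \<or> LLr a b e0 e1 s = 0"
    then have "m = 0 \<or> l = 0" by (auto simp: m_def l_def)
    then show "outer_degenerate (Phi2 a b e0 e1) s" unfolding outer_degenerate_def Cm by auto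
  next
    assume h: "LLr a b e0 e1 s \<noteq> 0 \<and> e1\<^sup>2 < MMr a b e0 e1 s"
    then have "m > 0" "l \<noteq> 0" by (auto simp: m_def l_def)
    then show "outer_center (Phi2 a b e0 e1) s" unfolding outer_center_def Cm
      using kpos by (simp add: mult_pos_pos)
  next
    assume h: "LLr a b e0 e1 s \<noteq> 0 \<and> MMr a b e0 e1 s < e1\<^sup>2"
    then have "m < 0" "l \<noteq> 0" by (auto simp: m_def l_def)
    then show "outer_saddle (Phi2 a b e0 e1) s" unfolding outer_saddle_def Cm
      using kpos by (simp add: mult_pos_neg)
  qed
qed

end
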